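(* Let $\mathcal X=\mathbb R$, let $X$ satisfy $\mathbb E[X^2]<\infty$, and let $\Delta(x,\hat x)=(x-\hat x)^2$. Let $$R(D,0):=\inf\{I(X;\hat X):\mathbb E[(X-\hat X)^2]\le D,\ p_{\hat X}=p_X\}.$$ Then for every $D>0$ and $\epsilon>0$ there exist real random variables $\tilde X$ and $\hat X$, jointly distributed with $X$, such that all of the following hold: - $\tilde X$ is discrete with finite support; - $X\leftrightarrow\tilde X\leftrightarrow\hat X$ is a Markov chain; - $I(X;\tilde X)\le R(D,0)+\epsilon$; - $\mathbb E[(X-\hat X)^2]\le D$; - $p_{\hat X}=p_X$. *)

theory Defs
  imports "HOL-Probability.Probability"
begin

definition kl_div_ext :: "'a measure \<Rightarrow> 'a measure \<Rightarrow> ereal" where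
  "kl_div_ext Q P =
     (if absolutely_continuous Q P \<and> sets P = sets Q \<and>
         integrable P (entropy_density (exp 1) Q P)
      then ereal (KL_divergence (exp 1) Q P) else \<infinity>)"

definition mi_joint :: "(real \<times> real) measure \<Rightarrow> ereal" where
  "mi_joint J = kl_div_ext (distr J borel fst \<Otimes>\<^sub>M distr J borel snd) J"

definition mutual_info :: "'b measure \<Rightarrow> ('b \<Rightarrow> real) \<Rightarrow> ('b \<Rightarrow> real) \<Rightarrow> ereal" where
  "mutual_info N X Y = mi_joint (distr N (borel \<Otimes>\<^sub>M borel) (\<lambda>\<omega>. (X \<omega>, Y \<omega>)))"

definition rate_perfect_realism :: "real measure \<Rightarrow> real \<Rightarrow> ereal" where
  "rate_perfect_realism PX D =
     Inf {mi_joint J | J. prob_space J \<and> sets J = sets (borel \<Otimes>\<^sub>M borel) \<and>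
            distr J borel fst = PX \<and> distr J borel snd = PX \<and>
            (\<integral>\<^sup>+ z. ennreal ((fst z - snd z)^2) \<partial>J) \<le> ennreal D}"

definition markov_chain_fin_mid ::
  "'b measure \<Rightarrow> ('b \<Rightarrow> real) \<Rightarrow> ('b \<Rightarrow> real) \<Rightarrow> ('b \<Rightarrow> real) \<Rightarrow> bool" where
  "markov_chain_fin_mid N X T Y \<longleftrightarrow>
     (\<forall>t A B. A \<in> sets borel \<longrightarrow> B \<in> sets borel \<longrightarrow>
        measure N {\<omega>\<in>space N. X \<omega> \<in> A \<and> T \<omega> = t \<and> Y \<omega> \<in> B} * measure N {\<omega>\<in>space N. T \<omega> = t}
        = measure N {\<omega>\<in>space N. X \<omega> \<in> A \<and> T \<omega> = t} * measure N {\<omega>\<in>space N. T \<omega> = t \<and> Y \<omega> \<in> B})"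

end

theory Submission
  imports Defs
begin


lemma sum_ind: "finite T \<Longrightarrow> (\<Sum>\<tau>\<in>T. indicator {s} \<tau> * (c \<tau>::'b::{comm_semiring_1})) = (if s \<in> T then c s else 0)"
proof (cases "s \<in> T")
  case True
  assume "finite T"
  then show ?thesis using True by (subst sum.remove[of T s]) (auto intro!: sum.neutral)
next
  case False
  then show ?thesis by (auto intro!: sum.neutral simp: indicator_def)
qed

lemma log_e: "log (exp 1) y = ln y"
  by (simp add: log_def)

lemma KLD:
  fixes M :: "'a measure" and g1 g2 :: "'a \<Rightarrow> real"
  assumes sf: "sigma_finite_measure M"
    and m[measurable]: "g1 \<in> borel_measurable M" "g2 \<in> borel_measurable M"
    and nn1: "\<And>x. 0 \<le> g1 x" and nn2: "\<And>x. 0 \<le> g2 x"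
    and ac: "AE x in M. g1 x = 0 \<longrightarrow> g2 x = 0"
    and fm: "finite_measure (density M g1)"
    and int: "integrable M (\<lambda>x. g2 x * ln (g2 x / g1 x))"
  shows "kl_div_ext (density M g1) (density M g2) = ereal (\<integral>x. g2 x * ln (g2 x / g1 x) \<partial>M)"
proof -
  define Q where "Q = density M g1"
  define r where "r x = g2 x / g1 x" for x
  have rm[measurable]: "r \<in> borel_measurable M" unfolding r_def by measurable
  have rnn: "0 \<le> r x" for x unfolding r_def using nn1 nn2 by simp
  have sQ[measurable_cong]: "sets Q = sets M" unfolding Q_def by simp
  have eqd: "density M g2 = density Q r"
    unfolding Q_def r_def using nn1 nn2 ac by (subst density_density_divide) auto
  interpret Q: finite_measure Q unfolding Q_def by (rule fm)
  have sfQ: "sigma_finite_measure Q" by unfold_locales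
  have ac': "absolutely_continuous Q (density Q r)"
    by (rule absolutely_continuousI_density) measurable
  have RN: "AE x in Q. RN_deriv Q (density Q r) x = ennreal (r x)"
  proof -
    have "density Q (RN_deriv Q (density Q r)) = density Q r"
      by (rule density_RN_deriv_density) measurable
    then show ?thesis
      by (intro sigma_finite_measure.density_unique[OF sfQ]) auto
  qed
  have ent: "AE x in Q. r x * entropy_density (exp 1) Q (density Q r) x = r x * ln (r x)"
    using RN by eventually_elim (simp add: entropy_density_def log_e rnn)
  have i1: "integrable M (\<lambda>x. g1 x * (r x * ln (r x)))"
  proof (rule integrable_cong_AE[THEN iffD1, OF _ _ _ int])
    show "AE x in M. g2 x * ln (g2 x / g1 x) = g1 x * (r x * ln (r x))"
      using ac by eventually_elim (auto simp: r_def)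
  qed measurable
  have i2: "integrable Q (\<lambda>x. r x * ln (r x))"
    unfolding Q_def using i1 nn1
    by (subst integrable_real_density) auto
  have i3: "integrable Q (\<lambda>x. r x * entropy_density (exp 1) Q (density Q r) x)"
    by (rule integrable_cong_AE[THEN iffD1, OF _ _ _ i2]) (use ent in \<open>auto elim: AE_mp\<close>)
  have i4: "integrable (density Q r) (entropy_density (exp 1) Q (density Q r))"
    using i3 rnn by (subst integrable_real_density) auto
  have KL: "KL_divergence (exp 1) (density M g1) (density M g2) = (\<integral>x. g2 x * log (exp 1) (g2 x / g1 x) \<partial>M)"
    by (rule sigma_finite_measure.KL_density_density[OF sf]) (use nn1 nn2 ac in auto)
  show ?thesis
    unfolding kl_div_ext_def eqd[symmetric] KL[unfolded log_e]
    using ac' i4 unfolding Q_def eqd by simp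
qed

lemma ulnu_bound:
  fixes u w :: real
  assumes "0 \<le> u" "u \<le> 1" "0 < w"
  shows "\<bar>u * ln (u / w)\<bar> \<le> 1 + \<bar>ln w\<bar>"
proof (cases "u = 0")
  case True then show ?thesis by simp
next
  case False
  then have u: "0 < u" using assms by simp
  have l: "ln (u / w) = ln u - ln w" using u assms by (simp add: ln_div)
  have a: "ln u \<le> 0" using u assms by simp
  have b: "1 - 1 / u \<le> ln u"
  proof -
    have "ln (1 / u) \<le> 1 / u - 1" using u by (intro ln_le_minus_one) simp
    then show ?thesis using u by (simp add: ln_div)
  qed
  have c: "u * ln u \<ge> u - 1"
  proof -
    have "u * (1 - 1 / u) \<le> u * ln u" using b u by (intro mult_left_mono) auto
    then show ?thesis using u by (simp add: algebra_simps)
  qed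
  have d: "u * ln u \<le> 0" using a u by (simp add: mult_nonneg_nonpos)
  have e: "\<bar>u * ln w\<bar> \<le> \<bar>ln w\<bar>" using u assms by (simp add: abs_mult mult_left_le_one_le)
  have "\<bar>u * ln (u / w)\<bar> = \<bar>u * ln u - u * ln w\<bar>" by (simp add: l algebra_simps)
  also have "\<dots> \<le> \<bar>u * ln u\<bar> + \<bar>u * ln w\<bar>" by (rule abs_triangle_ineq4)
  also have "\<dots> \<le> 1 + \<bar>ln w\<bar>" using c d e assms by linarith
  finally show ?thesis .
qed

locale fc =
  fixes P :: "real measure" and T :: "real set" and h k :: "real \<Rightarrow> real \<Rightarrow> real" and w :: "real \<Rightarrow> real"
  assumes P: "prob_space P" and sP: "sets P = sets borel"
    and fin: "finite T" and ne: "T \<noteq> {}"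
    and hm[measurable]: "\<And>t. h t \<in> borel_measurable borel" and km[measurable]: "\<And>t. k t \<in> borel_measurable borel"
    and hnn: "\<And>t x. 0 \<le> h t x" and h1: "\<And>t x. h t x \<le> 1" and knn: "\<And>t x. 0 \<le> k t x"
    and wpos: "\<And>t. t \<in> T \<Longrightarrow> 0 < w t"
    and hint: "\<And>t. t \<in> T \<Longrightarrow> (\<integral>\<^sup>+x. ennreal (h t x) \<partial>P) = ennreal (w t)"
    and kint: "\<And>t. t \<in> T \<Longrightarrow> (\<integral>\<^sup>+x. ennreal (k t x) \<partial>P) = ennreal (w t)"
    and hsum: "AE x in P. (\<Sum>t\<in>T. h t x) = 1"
    and ksum: "AE x in P. (\<Sum>t\<in>T. k t x) = 1"
begin

lemma sP'[measurable_cong]: "sets P = sets borel" by (rule sP)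

definition "Ct = distr (count_space T) borel (\<lambda>x. x)"
definition "Ref = P \<Otimes>\<^sub>M (Ct \<Otimes>\<^sub>M P)"
definition "F \<omega> = (\<Sum>\<tau>\<in>T. indicator {\<tau>} (fst (snd \<omega>)) * (h \<tau> (fst \<omega>) * k \<tau> (snd (snd \<omega>)) / w \<tau>))"
definition "N = density Ref (\<lambda>\<omega>. ennreal (F \<omega>))"
definition "Xt \<omega> = (if fst (snd \<omega>) \<in> T then fst (snd \<omega>) else Min T)"

lemma sCt[measurable_cong]: "sets Ct = sets borel" unfolding Ct_def by simp

lemma sRef: "sets Ref = sets (borel \<Otimes>\<^sub>M (borel \<Otimes>\<^sub>M borel))"
  unfolding Ref_def by (intro sets_pair_measure_cong sP sets_pair_measure_cong sCt)

lemma sRef'[measurable_cong]: "sets Ref = sets (borel \<Otimes>\<^sub>M (borel \<Otimes>\<^sub>M borel))" by (rule sRef)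

lemma Ct_finite: "finite_measure Ct"
proof -
  have "finite_measure (count_space T)" using fin by (rule finite_measure_count_space)
  then show ?thesis unfolding Ct_def
    by (rule finite_measure.finite_measure_distr) (simp add: measurable_count_space_eq1)
qed

lemma P_sf: "sigma_finite_measure P"
  using P by (simp add: prob_space_imp_sigma_finite)

lemma Ct_sf: "sigma_finite_measure Ct"
  using Ct_finite by (simp add: finite_measure_def)

lemma CtP_sf: "sigma_finite_measure (Ct \<Otimes>\<^sub>M P)"
  by (rule sigma_finite_pair_measure[OF Ct_sf P_sf])

lemma F_meas[measurable]: "F \<in> borel_measurable (borel \<Otimes>\<^sub>M (borel \<Otimes>\<^sub>M borel))"
  unfolding F_def by measurable

lemma Ct_int: "(\<integral>\<^sup>+t. g t \<partial>Ct) = (\<Sum>t\<in>T. g t)" if [measurable]: "g \<in> borel_measurable borel" for g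
  unfolding Ct_def
  by (subst nn_integral_distr) (auto simp: measurable_count_space_eq1 nn_integral_count_space_finite fin)

lemma F_at: "\<tau> \<in> T \<Longrightarrow> F (x, \<tau>, y) = h \<tau> x * k \<tau> y / w \<tau>"
  unfolding F_def using fin by (subst sum.remove[of T \<tau>]) (auto intro!: sum.neutral)

lemma nnI:
  assumes g[measurable]: "g \<in> borel_measurable (borel \<Otimes>\<^sub>M (borel \<Otimes>\<^sub>M borel))"
  shows "(\<integral>\<^sup>+\<omega>. g \<omega> \<partial>N) = (\<Sum>\<tau>\<in>T. \<integral>\<^sup>+x. \<integral>\<^sup>+y. g (x,\<tau>,y) * ennreal (h \<tau> x * k \<tau> y / w \<tau>) \<partial>P \<partial>P)"
proof -
  have "(\<integral>\<^sup>+\<omega>. g \<omega> \<partial>N) = (\<integral>\<^sup>+\<omega>. ennreal (F \<omega>) * g \<omega> \<partial>Ref)"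
    unfolding N_def by (rule nn_integral_density) measurable
  also have "\<dots> = (\<integral>\<^sup>+x. \<integral>\<^sup>+ty. ennreal (F (x,ty)) * g (x,ty) \<partial>(Ct \<Otimes>\<^sub>M P) \<partial>P)"
    unfolding Ref_def by (rule sigma_finite_measure.nn_integral_fst[symmetric, OF CtP_sf]) measurable
  also have "\<dots> = (\<integral>\<^sup>+x. \<integral>\<^sup>+t. \<integral>\<^sup>+y. ennreal (F (x,t,y)) * g (x,t,y) \<partial>P \<partial>Ct \<partial>P)"
    apply (rule nn_integral_cong)
    apply (rule sigma_finite_measure.nn_integral_fst[symmetric, OF P_sf])
    by measurable
  also have "\<dots> = (\<integral>\<^sup>+x. (\<Sum>\<tau>\<in>T. \<integral>\<^sup>+y. g (x,\<tau>,y) * ennreal (h \<tau> x * k \<tau> y / w \<tau>) \<partial>P) \<partial>P)"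
    apply (rule nn_integral_cong)
    apply (subst Ct_int)
     apply (rule sigma_finite_measure.borel_measurable_nn_integral[OF P_sf])
     apply measurable
    apply (rule sum.cong, simp)
    apply (rule nn_integral_cong)
    by (simp add: F_at mult.commute)
  also have "\<dots> = (\<Sum>\<tau>\<in>T. \<integral>\<^sup>+x. \<integral>\<^sup>+y. g (x,\<tau>,y) * ennreal (h \<tau> x * k \<tau> y / w \<tau>) \<partial>P \<partial>P)"
    apply (rule nn_integral_sum)
    apply (rule sigma_finite_measure.borel_measurable_nn_integral[OF P_sf])
    by measurable
  finally show ?thesis .
qed


lemma space_P: "space P = UNIV"
  using sets_eq_imp_space_eq[OF sP] by simp

lemma space_N: "space N = UNIV"
  unfolding N_def Ref_def using sets_eq_imp_space_eq[OF sCt]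
  by (simp add: space_pair_measure space_P)

lemma sN: "sets N = sets (borel \<Otimes>\<^sub>M (borel \<Otimes>\<^sub>M borel))"
  unfolding N_def by (simp add: sRef)

lemma sN'[measurable_cong]: "sets N = sets (borel \<Otimes>\<^sub>M (borel \<Otimes>\<^sub>M borel))" by (rule sN)

lemma T_borel: "T \<in> sets borel"
  using fin by (simp add: finite_imp_closed)

lemma pr_meas[measurable]: "(\<lambda>t::real. if t \<in> T then t else Min T) \<in> borel_measurable borel"
  by (rule measurable_If_set) (auto simp: T_borel)

lemma Xt_meas[measurable]: "Xt \<in> borel_measurable (borel \<Otimes>\<^sub>M (borel \<Otimes>\<^sub>M borel))"
proof -
  have "Xt = (\<lambda>t::real. if t \<in> T then t else Min T) \<circ> (\<lambda>\<omega>. fst (snd \<omega>))"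
    unfolding Xt_def by auto
  also have "\<dots> \<in> borel_measurable (borel \<Otimes>\<^sub>M (borel \<Otimes>\<^sub>M borel))"
    by (rule measurable_comp[OF _ pr_meas]) measurable
  finally show ?thesis .
qed

lemma Xt_at: "\<tau> \<in> T \<Longrightarrow> Xt (x, \<tau>, y) = \<tau>"
  unfolding Xt_def by simp

lemma Xt_in: "Xt \<omega> \<in> T"
  unfolding Xt_def using fin ne by (auto intro: Min_in)

lemma t1: "(\<lambda>\<omega>. indicator {s} (Xt \<omega>) :: ennreal) \<in> borel_measurable (borel \<Otimes>\<^sub>M (borel \<Otimes>\<^sub>M borel))"
  by measurable
lemma t2: assumes [measurable]: "A \<in> sets borel" shows "(\<lambda>\<omega>. indicator A (fst \<omega>) :: ennreal) \<in> borel_measurable (borel \<Otimes>\<^sub>M (borel \<Otimes>\<^sub>M borel))"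
  by measurable

lemma sep:
  assumes [measurable]: "a \<in> borel_measurable borel" "b \<in> borel_measurable borel"
  shows "(\<integral>\<^sup>+x. \<integral>\<^sup>+y. a x * b y * ennreal (h \<tau> x * k \<tau> y / w \<tau>) \<partial>P \<partial>P) =
         (\<integral>\<^sup>+x. a x * ennreal (h \<tau> x) \<partial>P) * (\<integral>\<^sup>+y. b y * ennreal (k \<tau> y) \<partial>P) * ennreal (1 / w \<tau>)"
proof -
  have e: "ennreal (h \<tau> x * k \<tau> y / w \<tau>) = ennreal (h \<tau> x) * ennreal (k \<tau> y) * ennreal (1 / w \<tau>)" for x y
  proof (cases "w \<tau> \<ge> 0")
    case True
    then show ?thesis using hnn knn
      by (simp add: ennreal_mult[symmetric] divide_inverse)
  next
    case False
    then show ?thesis using hnn[of \<tau> x] knn[of \<tau> y]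
      by (simp add: divide_nonneg_neg ennreal_neg mult_nonneg_nonneg)
  qed
  have "(\<integral>\<^sup>+x. \<integral>\<^sup>+y. a x * b y * ennreal (h \<tau> x * k \<tau> y / w \<tau>) \<partial>P \<partial>P) =
        (\<integral>\<^sup>+x. (a x * ennreal (h \<tau> x) * ennreal (1 / w \<tau>)) * (\<integral>\<^sup>+y. b y * ennreal (k \<tau> y) \<partial>P) \<partial>P)"
    apply (rule nn_integral_cong)
    apply (subst nn_integral_cmult[symmetric])
     apply measurable
    apply (rule nn_integral_cong)
    by (simp add: e mult_ac)
  also have "\<dots> = (\<integral>\<^sup>+x. a x * ennreal (h \<tau> x) \<partial>P) * ennreal (1 / w \<tau>) * (\<integral>\<^sup>+y. b y * ennreal (k \<tau> y) \<partial>P)"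
    by (simp add: nn_integral_multc)
  finally show ?thesis by (simp add: mult_ac)
qed

lemma emeasure_XTY:
  assumes [measurable]: "A \<in> sets borel" "B \<in> sets borel"
  shows "emeasure N {\<omega>\<in>space N. fst \<omega> \<in> A \<and> Xt \<omega> = s \<and> snd (snd \<omega>) \<in> B} =
     (if s \<in> T then (\<integral>\<^sup>+x. indicator A x * ennreal (h s x) \<partial>P) * (\<integral>\<^sup>+y. indicator B y * ennreal (k s y) \<partial>P) * ennreal (1 / w s) else 0)"
proof -
  let ?S = "{\<omega>\<in>space N. fst \<omega> \<in> A \<and> Xt \<omega> = s \<and> snd (snd \<omega>) \<in> B}"
  have S: "?S \<in> sets N" by measurable
  have mm: "(\<lambda>\<omega>. indicator A (fst \<omega>) * indicator {s} (Xt \<omega>) * indicator B (snd (snd \<omega>)) :: ennreal) \<in> borel_measurable (borel \<Otimes>\<^sub>M (borel \<Otimes>\<^sub>M borel))"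
    by measurable
  have "emeasure N ?S = (\<integral>\<^sup>+\<omega>. indicator A (fst \<omega>) * indicator {s} (Xt \<omega>) * indicator B (snd (snd \<omega>)) \<partial>N)"
    apply (subst nn_integral_indicator[OF S, symmetric])
    apply (rule nn_integral_cong)
    by (auto simp: indicator_def space_N)
  also have "\<dots> = (\<Sum>\<tau>\<in>T. \<integral>\<^sup>+x. \<integral>\<^sup>+y. indicator A x * indicator {s} (Xt (x,\<tau>,y)) * indicator B y * ennreal (h \<tau> x * k \<tau> y / w \<tau>) \<partial>P \<partial>P)"
    by (subst nnI[where g="\<lambda>\<omega>. indicator A (fst \<omega>) * indicator {s} (Xt \<omega>) * indicator B (snd (snd \<omega>))"]) (rule mm, simp)
  also have "\<dots> = (\<Sum>\<tau>\<in>T. indicator {s} \<tau> * ((\<integral>\<^sup>+x. indicator A x * ennreal (h \<tau> x) \<partial>P) * (\<integral>\<^sup>+y. indicator B y * ennreal (k \<tau> y) \<partial>P) * ennreal (1 / w \<tau>)))"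
  proof (rule sum.cong[OF refl])
    fix \<tau> assume t: "\<tau> \<in> T"
    have "(\<integral>\<^sup>+x. \<integral>\<^sup>+y. indicator A x * indicator {s} (Xt (x,\<tau>,y)) * indicator B y * ennreal (h \<tau> x * k \<tau> y / w \<tau>) \<partial>P \<partial>P)
       = (\<integral>\<^sup>+x. \<integral>\<^sup>+y. (indicator {s} \<tau> * indicator A x) * indicator B y * ennreal (h \<tau> x * k \<tau> y / w \<tau>) \<partial>P \<partial>P)"
      by (simp add: Xt_at[OF t] mult_ac)
    also have "\<dots> = (\<integral>\<^sup>+x. indicator {s} \<tau> * indicator A x * ennreal (h \<tau> x) \<partial>P) * (\<integral>\<^sup>+y. indicator B y * ennreal (k \<tau> y) \<partial>P) * ennreal (1 / w \<tau>)"
      by (rule sep) measurable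
    also have "\<dots> = indicator {s} \<tau> * ((\<integral>\<^sup>+x. indicator A x * ennreal (h \<tau> x) \<partial>P) * (\<integral>\<^sup>+y. indicator B y * ennreal (k \<tau> y) \<partial>P) * ennreal (1 / w \<tau>))"
      by (simp add: mult.assoc nn_integral_cmult)
    finally show "(\<integral>\<^sup>+x. \<integral>\<^sup>+y. indicator A x * indicator {s} (Xt (x,\<tau>,y)) * indicator B y * ennreal (h \<tau> x * k \<tau> y / w \<tau>) \<partial>P \<partial>P) = indicator {s} \<tau> * ((\<integral>\<^sup>+x. indicator A x * ennreal (h \<tau> x) \<partial>P) * (\<integral>\<^sup>+y. indicator B y * ennreal (k \<tau> y) \<partial>P) * ennreal (1 / w \<tau>))" .
  qed
  finally show ?thesis by (simp only: sum_ind[OF fin])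
qed


lemma Wiw: "t \<in> T \<Longrightarrow> ennreal (w t) * ennreal (1 / w t) = 1"
  using wpos[of t] by (simp add: ennreal_mult[symmetric])

lemma WxI: "t \<in> T \<Longrightarrow> ennreal (w t) * x * ennreal (1 / w t) = x"
proof -
  assume t: "t \<in> T"
  have "ennreal (w t) * x * ennreal (1 / w t) = x * (ennreal (w t) * ennreal (1 / w t))" by (simp add: mult_ac)
  then show ?thesis using Wiw[OF t] by simp
qed

lemma markov: "markov_chain_fin_mid N fst Xt (\<lambda>\<omega>. snd (snd \<omega>))"
  unfolding markov_chain_fin_mid_def
proof (intro allI impI)
  fix s A B assume A[measurable]: "A \<in> sets (borel :: real measure)" and B[measurable]: "B \<in> sets (borel :: real measure)"
  have e1: "{\<omega>\<in>space N. Xt \<omega> = s} = {\<omega>\<in>space N. fst \<omega> \<in> UNIV \<and> Xt \<omega> = s \<and> snd (snd \<omega>) \<in> UNIV}" by auto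
  have e2: "{\<omega>\<in>space N. fst \<omega> \<in> A \<and> Xt \<omega> = s} = {\<omega>\<in>space N. fst \<omega> \<in> A \<and> Xt \<omega> = s \<and> snd (snd \<omega>) \<in> UNIV}" by auto
  have e3: "{\<omega>\<in>space N. Xt \<omega> = s \<and> snd (snd \<omega>) \<in> B} = {\<omega>\<in>space N. fst \<omega> \<in> UNIV \<and> Xt \<omega> = s \<and> snd (snd \<omega>) \<in> B}" by auto
  show "measure N {\<omega>\<in>space N. fst \<omega> \<in> A \<and> Xt \<omega> = s \<and> snd (snd \<omega>) \<in> B} * measure N {\<omega>\<in>space N. Xt \<omega> = s} =
        measure N {\<omega>\<in>space N. fst \<omega> \<in> A \<and> Xt \<omega> = s} * measure N {\<omega>\<in>space N. Xt \<omega> = s \<and> snd (snd \<omega>) \<in> B}"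
  proof (cases "s \<in> T")
    case False
    have "emeasure N {\<omega>\<in>space N. fst \<omega> \<in> A \<and> Xt \<omega> = s} = 0"
      by (subst e2, subst emeasure_XTY) (auto simp: False)
    moreover have "emeasure N {\<omega>\<in>space N. Xt \<omega> = s} = 0"
      by (subst e1, subst emeasure_XTY) (auto simp: False)
    ultimately show ?thesis by (simp add: measure_def)
  next
    case True
    define a where "a = (\<integral>\<^sup>+x. indicator A x * ennreal (h s x) \<partial>P)"
    define b where "b = (\<integral>\<^sup>+x. indicator B x * ennreal (k s x) \<partial>P)"
    define W where "W = ennreal (w s)"
    define iw where "iw = ennreal (1 / w s)"
    have Wi: "W * iw = 1" unfolding W_def iw_def using Wiw[OF True] .
    have hW: "(\<integral>\<^sup>+x. indicator UNIV x * ennreal (h s x) \<partial>P) = W" using hint[OF True] by (simp add: W_def)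
    have kW: "(\<integral>\<^sup>+x. indicator UNIV x * ennreal (k s x) \<partial>P) = W" using kint[OF True] by (simp add: W_def)
    have m1: "measure N {\<omega>\<in>space N. fst \<omega> \<in> A \<and> Xt \<omega> = s \<and> snd (snd \<omega>) \<in> B} = enn2real (a * b * iw)"
      unfolding measure_def by (simp add: emeasure_XTY True a_def b_def iw_def)
    have m2: "measure N {\<omega>\<in>space N. Xt \<omega> = s} = enn2real W"
    proof -
      have "emeasure N {\<omega>\<in>space N. Xt \<omega> = s} = W * W * iw"
        apply (subst e1, subst emeasure_XTY) apply simp apply simp
        using True hW kW iw_def by simp
      then show ?thesis unfolding measure_def using Wi by (simp add: mult.assoc)
    qed
    have m3: "measure N {\<omega>\<in>space N. fst \<omega> \<in> A \<and> Xt \<omega> = s} = enn2real a"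
    proof -
      have "emeasure N {\<omega>\<in>space N. fst \<omega> \<in> A \<and> Xt \<omega> = s} = a * W * iw"
        apply (subst e2, subst emeasure_XTY) apply simp apply simp
        using True kW iw_def a_def by simp
      then show ?thesis unfolding measure_def using Wi by (simp add: mult.assoc)
    qed
    have m4: "measure N {\<omega>\<in>space N. Xt \<omega> = s \<and> snd (snd \<omega>) \<in> B} = enn2real b"
    proof -
      have "emeasure N {\<omega>\<in>space N. Xt \<omega> = s \<and> snd (snd \<omega>) \<in> B} = W * b * iw"
        apply (subst e3, subst emeasure_XTY) apply simp apply simp
        using True hW iw_def b_def by simp
      also have "W * b * iw = b * (W * iw)" by (simp add: mult_ac)
      finally show ?thesis unfolding measure_def using Wi by simp
    qed
    have "enn2real (a * b * iw) * enn2real W = enn2real (a * b * (W * iw))"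
      by (simp add: enn2real_mult mult_ac)
    then show ?thesis unfolding m1 m2 m3 m4 Wi by (simp add: enn2real_mult)
  qed
qed


lemma nnX:
  assumes [measurable]: "a \<in> borel_measurable borel"
  shows "(\<integral>\<^sup>+\<omega>. a (fst \<omega>) \<partial>N) = (\<integral>\<^sup>+x. a x \<partial>P)"
proof -
  have "(\<integral>\<^sup>+\<omega>. a (fst \<omega>) \<partial>N) = (\<Sum>\<tau>\<in>T. \<integral>\<^sup>+x. \<integral>\<^sup>+y. a x * 1 * ennreal (h \<tau> x * k \<tau> y / w \<tau>) \<partial>P \<partial>P)"
    apply (subst nnI[where g="\<lambda>\<omega>. a (fst \<omega>)"])
    by measurable
  also have "\<dots> = (\<Sum>\<tau>\<in>T. \<integral>\<^sup>+x. a x * ennreal (h \<tau> x) \<partial>P)"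
  proof (rule sum.cong[OF refl])
    fix \<tau> assume t: "\<tau> \<in> T"
    show "(\<integral>\<^sup>+x. \<integral>\<^sup>+y. a x * 1 * ennreal (h \<tau> x * k \<tau> y / w \<tau>) \<partial>P \<partial>P) = (\<integral>\<^sup>+x. a x * ennreal (h \<tau> x) \<partial>P)"
      apply (subst sep[where b="\<lambda>_. 1"]) apply measurable
      using kint[OF t] Wiw[OF t] by (simp add: mult.assoc)
  qed
  also have "\<dots> = (\<integral>\<^sup>+x. (\<Sum>\<tau>\<in>T. a x * ennreal (h \<tau> x)) \<partial>P)"
    by (rule nn_integral_sum[symmetric]) measurable
  also have "\<dots> = (\<integral>\<^sup>+x. a x \<partial>P)"
  proof (rule nn_integral_cong_AE)
    show "AE x in P. (\<Sum>\<tau>\<in>T. a x * ennreal (h \<tau> x)) = a x"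
      using hsum
    proof eventually_elim
      case (elim x)
      have "(\<Sum>\<tau>\<in>T. a x * ennreal (h \<tau> x)) = a x * ennreal (\<Sum>\<tau>\<in>T. h \<tau> x)"
      proof -
        have "ennreal (\<Sum>\<tau>\<in>T. h \<tau> x) = (\<Sum>\<tau>\<in>T. ennreal (h \<tau> x))" by (rule sum_ennreal[symmetric]) (simp add: hnn)
        then show ?thesis by (simp add: sum_distrib_left)
      qed
      then show ?case using elim by simp
    qed
  qed
  finally show ?thesis .
qed

lemma nnY:
  assumes [measurable]: "b \<in> borel_measurable borel"
  shows "(\<integral>\<^sup>+\<omega>. b (snd (snd \<omega>)) \<partial>N) = (\<integral>\<^sup>+x. b x \<partial>P)"
proof -
  have "(\<integral>\<^sup>+\<omega>. b (snd (snd \<omega>)) \<partial>N) = (\<Sum>\<tau>\<in>T. \<integral>\<^sup>+x. \<integral>\<^sup>+y. 1 * b y * ennreal (h \<tau> x * k \<tau> y / w \<tau>) \<partial>P \<partial>P)"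
    apply (subst nnI[where g="\<lambda>\<omega>. b (snd (snd \<omega>))"])
    by measurable
  also have "\<dots> = (\<Sum>\<tau>\<in>T. \<integral>\<^sup>+x. b x * ennreal (k \<tau> x) \<partial>P)"
  proof (rule sum.cong[OF refl])
    fix \<tau> assume t: "\<tau> \<in> T"
    show "(\<integral>\<^sup>+x. \<integral>\<^sup>+y. 1 * b y * ennreal (h \<tau> x * k \<tau> y / w \<tau>) \<partial>P \<partial>P) = (\<integral>\<^sup>+x. b x * ennreal (k \<tau> x) \<partial>P)"
      apply (subst sep[where a="\<lambda>_. 1"]) apply measurable
      using hint[OF t] WxI[OF t] by simp
  qed
  also have "\<dots> = (\<integral>\<^sup>+x. (\<Sum>\<tau>\<in>T. b x * ennreal (k \<tau> x)) \<partial>P)"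
    by (rule nn_integral_sum[symmetric]) measurable
  also have "\<dots> = (\<integral>\<^sup>+x. b x \<partial>P)"
  proof (rule nn_integral_cong_AE)
    show "AE x in P. (\<Sum>\<tau>\<in>T. b x * ennreal (k \<tau> x)) = b x"
      using ksum
    proof eventually_elim
      case (elim x)
      have "(\<Sum>\<tau>\<in>T. b x * ennreal (k \<tau> x)) = b x * ennreal (\<Sum>\<tau>\<in>T. k \<tau> x)"
      proof -
        have "ennreal (\<Sum>\<tau>\<in>T. k \<tau> x) = (\<Sum>\<tau>\<in>T. ennreal (k \<tau> x))" by (rule sum_ennreal[symmetric]) (simp add: knn)
        then show ?thesis by (simp add: sum_distrib_left)
      qed
      then show ?case using elim by simp
    qed
  qed
  finally show ?thesis .
qed

lemma probN: "prob_space N"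
proof (rule prob_spaceI)
  have "emeasure N (space N) = (\<integral>\<^sup>+\<omega>. (\<lambda>_. 1) (fst \<omega>) \<partial>N)"
    by (simp add: space_N)
  also have "\<dots> = (\<integral>\<^sup>+x. 1 \<partial>P)" by (rule nnX) simp
  also have "\<dots> = 1" using P by (simp add: prob_space.emeasure_space_1)
  finally show "emeasure N (space N) = 1" .
qed

lemma distrX: "distr N borel fst = P"
proof (rule measure_eqI)
  show "sets (distr N borel fst) = sets P" by (simp add: sP)
  fix A assume "A \<in> sets (distr N borel fst)"
  then have A[measurable]: "A \<in> sets borel" by simp
  have "emeasure (distr N borel fst) A = emeasure N (fst -` A \<inter> space N)"
    by (rule emeasure_distr[OF _ A]) measurable
  also have "\<dots> = (\<integral>\<^sup>+\<omega>. indicator A (fst \<omega>) \<partial>N)"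
  proof -
    have S: "fst -` A \<inter> space N \<in> sets N" by (rule measurable_sets[OF _ A]) measurable
    show ?thesis by (subst nn_integral_indicator[OF S, symmetric]) (auto intro!: nn_integral_cong simp: indicator_def space_N)
  qed
  also have "\<dots> = emeasure P A" using A by (subst nnX) (auto simp: sP)
  finally show "emeasure (distr N borel fst) A = emeasure P A" .
qed

lemma distrY: "distr N borel (\<lambda>\<omega>. snd (snd \<omega>)) = P"
proof (rule measure_eqI)
  show "sets (distr N borel (\<lambda>\<omega>. snd (snd \<omega>))) = sets P" by (simp add: sP)
  fix A assume "A \<in> sets (distr N borel (\<lambda>\<omega>. snd (snd \<omega>)))"
  then have A[measurable]: "A \<in> sets borel" by simp
  have "emeasure (distr N borel (\<lambda>\<omega>. snd (snd \<omega>))) A = emeasure N ((\<lambda>\<omega>. snd (snd \<omega>)) -` A \<inter> space N)"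
    by (rule emeasure_distr[OF _ A]) measurable
  also have "\<dots> = (\<integral>\<^sup>+\<omega>. indicator A (snd (snd \<omega>)) \<partial>N)"
  proof -
    have S: "(\<lambda>\<omega>. snd (snd \<omega>)) -` A \<inter> space N \<in> sets N" by (rule measurable_sets[OF _ A]) measurable
    show ?thesis by (subst nn_integral_indicator[OF S, symmetric]) (auto intro!: nn_integral_cong simp: indicator_def space_N)
  qed
  also have "\<dots> = emeasure P A" using A by (subst nnY) (auto simp: sP)
  finally show "emeasure (distr N borel (\<lambda>\<omega>. snd (snd \<omega>))) A = emeasure P A" .
qed

lemma distortion:
  "(\<integral>\<^sup>+\<omega>. ennreal ((fst \<omega> - snd (snd \<omega>))^2) \<partial>N) =
   (\<Sum>\<tau>\<in>T. \<integral>\<^sup>+x. \<integral>\<^sup>+y. ennreal ((x - y)^2) * ennreal (h \<tau> x * k \<tau> y / w \<tau>) \<partial>P \<partial>P)"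
  apply (subst nnI[where g="\<lambda>\<omega>. ennreal ((fst \<omega> - snd (snd \<omega>))^2)"])
  by measurable


definition "G z = (\<Sum>\<tau>\<in>T. indicator {\<tau>} (snd z) * h \<tau> (fst z))"
definition "WF t = (\<Sum>\<tau>\<in>T. indicator {\<tau>} t * w \<tau>)"

lemma G_meas[measurable]: "G \<in> borel_measurable (borel \<Otimes>\<^sub>M borel)"
  unfolding G_def by measurable
lemma WF_meas[measurable]: "WF \<in> borel_measurable borel"
  unfolding WF_def by measurable

lemma G_at: "\<tau> \<in> T \<Longrightarrow> G (x, \<tau>) = h \<tau> x"
  unfolding G_def using fin by (subst sum.remove[of T \<tau>]) (auto intro!: sum.neutral)
lemma G_out: "t \<notin> T \<Longrightarrow> G (x, t) = 0"
  unfolding G_def by (auto intro!: sum.neutral simp: indicator_def)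
lemma WF_at: "\<tau> \<in> T \<Longrightarrow> WF \<tau> = w \<tau>"
  unfolding WF_def using fin by (subst sum.remove[of T \<tau>]) (auto intro!: sum.neutral)
lemma WF_out: "t \<notin> T \<Longrightarrow> WF t = 0"
  unfolding WF_def by (auto intro!: sum.neutral simp: indicator_def)
lemma G_nn: "0 \<le> G z"
  unfolding G_def by (auto intro!: sum_nonneg simp: hnn)
lemma WF_nn: "0 \<le> WF t"
  by (cases "t \<in> T") (auto simp: WF_at WF_out less_imp_le[OF wpos])

lemma sPCt[measurable_cong]: "sets (P \<Otimes>\<^sub>M Ct) = sets (borel \<Otimes>\<^sub>M borel)"
  by (intro sets_pair_measure_cong sP sCt)

lemma pair_fst_Xt_meas[measurable]: "(\<lambda>\<omega>. (fst \<omega>, Xt \<omega>)) \<in> N \<rightarrow>\<^sub>M borel \<Otimes>\<^sub>M borel"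
  by measurable

lemma J2_eq: "distr N (borel \<Otimes>\<^sub>M borel) (\<lambda>\<omega>. (fst \<omega>, Xt \<omega>)) = density (P \<Otimes>\<^sub>M Ct) (\<lambda>z. ennreal (G z))"
proof (rule measure_eqI)
  show "sets (distr N (borel \<Otimes>\<^sub>M borel) (\<lambda>\<omega>. (fst \<omega>, Xt \<omega>))) = sets (density (P \<Otimes>\<^sub>M Ct) (\<lambda>z. ennreal (G z)))"
    by (simp add: sPCt)
  fix S assume "S \<in> sets (distr N (borel \<Otimes>\<^sub>M borel) (\<lambda>\<omega>. (fst \<omega>, Xt \<omega>)))"
  then have S[measurable]: "S \<in> sets (borel \<Otimes>\<^sub>M borel)" by simp
  have "emeasure (distr N (borel \<Otimes>\<^sub>M borel) (\<lambda>\<omega>. (fst \<omega>, Xt \<omega>))) S = emeasure N ((\<lambda>\<omega>. (fst \<omega>, Xt \<omega>)) -` S \<inter> space N)"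
    by (rule emeasure_distr[OF _ S]) measurable
  also have "\<dots> = (\<integral>\<^sup>+\<omega>. indicator S (fst \<omega>, Xt \<omega>) \<partial>N)"
  proof -
    have S': "(\<lambda>\<omega>. (fst \<omega>, Xt \<omega>)) -` S \<inter> space N \<in> sets N" by (rule measurable_sets[OF _ S]) measurable
    show ?thesis by (subst nn_integral_indicator[OF S', symmetric]) (auto intro!: nn_integral_cong simp: indicator_def space_N)
  qed
  also have "\<dots> = (\<Sum>\<tau>\<in>T. \<integral>\<^sup>+x. \<integral>\<^sup>+y. indicator S (x, Xt (x,\<tau>,y)) * ennreal (h \<tau> x * k \<tau> y / w \<tau>) \<partial>P \<partial>P)"
    by (subst nnI[where g="\<lambda>\<omega>. indicator S (fst \<omega>, Xt \<omega>)"]) measurable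
  also have "\<dots> = (\<Sum>\<tau>\<in>T. \<integral>\<^sup>+x. indicator S (x, \<tau>) * ennreal (h \<tau> x) \<partial>P)"
  proof (rule sum.cong[OF refl])
    fix \<tau> assume t: "\<tau> \<in> T"
    have "(\<integral>\<^sup>+x. \<integral>\<^sup>+y. indicator S (x, Xt (x,\<tau>,y)) * ennreal (h \<tau> x * k \<tau> y / w \<tau>) \<partial>P \<partial>P)
        = (\<integral>\<^sup>+x. \<integral>\<^sup>+y. indicator S (x, \<tau>) * 1 * ennreal (h \<tau> x * k \<tau> y / w \<tau>) \<partial>P \<partial>P)"
      by (simp add: Xt_at[OF t])
    also have "\<dots> = (\<integral>\<^sup>+x. indicator S (x, \<tau>) * ennreal (h \<tau> x) \<partial>P) * (\<integral>\<^sup>+y. 1 * ennreal (k \<tau> y) \<partial>P) * ennreal (1 / w \<tau>)"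
      by (rule sep) measurable
    also have "\<dots> = (\<integral>\<^sup>+x. indicator S (x, \<tau>) * ennreal (h \<tau> x) \<partial>P)"
      using kint[OF t] Wiw[OF t] by (simp add: mult.assoc)
    finally show "(\<integral>\<^sup>+x. \<integral>\<^sup>+y. indicator S (x, Xt (x,\<tau>,y)) * ennreal (h \<tau> x * k \<tau> y / w \<tau>) \<partial>P \<partial>P) = (\<integral>\<^sup>+x. indicator S (x, \<tau>) * ennreal (h \<tau> x) \<partial>P)" .
  qed
  also have "\<dots> = (\<integral>\<^sup>+x. (\<Sum>\<tau>\<in>T. indicator S (x, \<tau>) * ennreal (h \<tau> x)) \<partial>P)"
    by (rule nn_integral_sum[symmetric]) measurable
  also have "\<dots> = (\<integral>\<^sup>+x. \<integral>\<^sup>+t. ennreal (G (x,t)) * indicator S (x,t) \<partial>Ct \<partial>P)"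
    apply (rule nn_integral_cong)
    apply (subst Ct_int)
     apply measurable
    by (auto intro!: sum.cong simp: G_at mult.commute)
  also have "\<dots> = (\<integral>\<^sup>+z. ennreal (G z) * indicator S z \<partial>(P \<Otimes>\<^sub>M Ct))"
    by (rule sigma_finite_measure.nn_integral_fst[OF Ct_sf]) measurable
  also have "\<dots> = emeasure (density (P \<Otimes>\<^sub>M Ct) (\<lambda>z. ennreal (G z))) S"
  proof -
    have gm: "(\<lambda>z. ennreal (G z)) \<in> borel_measurable (P \<Otimes>\<^sub>M Ct)" by measurable
    have Sm: "S \<in> sets (P \<Otimes>\<^sub>M Ct)" using S by (simp add: sPCt)
    show ?thesis by (simp add: emeasure_density[OF gm Sm] mult.commute)
  qed
  finally show "emeasure (distr N (borel \<Otimes>\<^sub>M borel) (\<lambda>\<omega>. (fst \<omega>, Xt \<omega>))) S = emeasure (density (P \<Otimes>\<^sub>M Ct) (\<lambda>z. ennreal (G z))) S" .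
qed


lemma distrXt: "distr N borel Xt = density Ct (\<lambda>t. ennreal (WF t))"
proof (rule measure_eqI)
  show "sets (distr N borel Xt) = sets (density Ct (\<lambda>t. ennreal (WF t)))" by (simp add: sCt)
  fix A assume "A \<in> sets (distr N borel Xt)"
  then have A[measurable]: "A \<in> sets borel" by simp
  have "emeasure (distr N borel Xt) A = emeasure N (Xt -` A \<inter> space N)"
    by (rule emeasure_distr[OF _ A]) measurable
  also have "\<dots> = (\<integral>\<^sup>+\<omega>. indicator A (Xt \<omega>) \<partial>N)"
  proof -
    have S': "Xt -` A \<inter> space N \<in> sets N" by (rule measurable_sets[OF _ A]) measurable
    show ?thesis by (subst nn_integral_indicator[OF S', symmetric]) (auto intro!: nn_integral_cong simp: indicator_def space_N)
  qed
  also have "\<dots> = (\<Sum>\<tau>\<in>T. \<integral>\<^sup>+x. \<integral>\<^sup>+y. indicator A (Xt (x,\<tau>,y)) * ennreal (h \<tau> x * k \<tau> y / w \<tau>) \<partial>P \<partial>P)"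
    by (subst nnI[where g="\<lambda>\<omega>. indicator A (Xt \<omega>)"]) measurable
  also have "\<dots> = (\<Sum>\<tau>\<in>T. ennreal (WF \<tau>) * indicator A \<tau>)"
  proof (rule sum.cong[OF refl])
    fix \<tau> assume t: "\<tau> \<in> T"
    have "(\<integral>\<^sup>+x. \<integral>\<^sup>+y. indicator A (Xt (x,\<tau>,y)) * ennreal (h \<tau> x * k \<tau> y / w \<tau>) \<partial>P \<partial>P)
        = (\<integral>\<^sup>+x. \<integral>\<^sup>+y. indicator A \<tau> * 1 * ennreal (h \<tau> x * k \<tau> y / w \<tau>) \<partial>P \<partial>P)"
      by (simp add: Xt_at[OF t])
    also have "\<dots> = (\<integral>\<^sup>+x. indicator A \<tau> * ennreal (h \<tau> x) \<partial>P) * (\<integral>\<^sup>+y. 1 * ennreal (k \<tau> y) \<partial>P) * ennreal (1 / w \<tau>)"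
      by (rule sep) measurable
    also have "\<dots> = indicator A \<tau> * (ennreal (w \<tau>) * ennreal (w \<tau>) * ennreal (1 / w \<tau>))"
      using kint[OF t] hint[OF t] by (simp add: nn_integral_cmult mult_ac)
    also have "\<dots> = ennreal (WF \<tau>) * indicator A \<tau>"
      using WxI[OF t, of "ennreal (w \<tau>)"] WF_at[OF t] by (simp add: mult.commute)
    finally show "(\<integral>\<^sup>+x. \<integral>\<^sup>+y. indicator A (Xt (x,\<tau>,y)) * ennreal (h \<tau> x * k \<tau> y / w \<tau>) \<partial>P \<partial>P) = ennreal (WF \<tau>) * indicator A \<tau>" .
  qed
  also have "\<dots> = (\<integral>\<^sup>+t. ennreal (WF t) * indicator A t \<partial>Ct)"
  proof -
    have gm: "(\<lambda>t. ennreal (WF t) * indicator A t) \<in> borel_measurable borel" by measurable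
    show ?thesis by (simp add: Ct_int[OF gm])
  qed
  also have "\<dots> = emeasure (density Ct (\<lambda>t. ennreal (WF t))) A"
  proof -
    have gm: "(\<lambda>t. ennreal (WF t)) \<in> borel_measurable Ct" by measurable
    have Sm: "A \<in> sets Ct" using A by (simp add: sCt)
    show ?thesis by (simp add: emeasure_density[OF gm Sm] mult.commute)
  qed
  finally show "emeasure (distr N borel Xt) A = emeasure (density Ct (\<lambda>t. ennreal (WF t))) A" .
qed

lemma probXt: "prob_space (density Ct (\<lambda>t. ennreal (WF t)))"
  unfolding distrXt[symmetric] by (rule prob_space.prob_space_distr[OF probN]) measurable

lemma Ct_lint: "(\<integral>t. g t \<partial>Ct) = (\<Sum>t\<in>T. g t)" if [measurable]: "g \<in> borel_measurable borel" for g :: "real \<Rightarrow> real"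
  unfolding Ct_def
  by (subst integral_distr) (auto simp: measurable_count_space_eq1 lebesgue_integral_count_space_finite fin)

definition "Bnd = 1 + (\<Sum>\<tau>\<in>T. \<bar>ln (w \<tau>)\<bar>)"

lemma integrand_bound: "\<bar>G z * ln (G z / WF (snd z))\<bar> \<le> Bnd"
proof (cases "snd z \<in> T")
  case False
  have "0 \<le> (\<Sum>\<tau>\<in>T. \<bar>ln (w \<tau>)\<bar>)" by (rule sum_nonneg) auto
  then show ?thesis using False G_out[of "snd z" "fst z"] by (simp add: Bnd_def)
next
  case True
  have "\<bar>G z * ln (G z / WF (snd z))\<bar> = \<bar>h (snd z) (fst z) * ln (h (snd z) (fst z) / w (snd z))\<bar>"
    using G_at[OF True, of "fst z"] WF_at[OF True] by simp
  also have "\<dots> \<le> 1 + \<bar>ln (w (snd z))\<bar>" by (rule ulnu_bound) (auto simp: hnn h1 wpos True)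
  also have "\<dots> \<le> Bnd"
  proof -
    have "\<bar>ln (w (snd z))\<bar> \<le> (\<Sum>\<tau>\<in>T. \<bar>ln (w \<tau>)\<bar>)" by (rule member_le_sum) (use True fin in auto)
    then show ?thesis unfolding Bnd_def by simp
  qed
  finally show ?thesis .
qed

lemma PCt_fin: "finite_measure (P \<Otimes>\<^sub>M Ct)"
  by (rule finite_measure_pair_measure[OF Ct_finite]) (use P in \<open>simp add: prob_space_def\<close>)

lemma int_main: "integrable (P \<Otimes>\<^sub>M Ct) (\<lambda>z. G z * ln (G z / WF (snd z)))"
  by (rule finite_measure.integrable_const_bound[OF PCt_fin, where B=Bnd]) (use integrand_bound in auto)

lemma int_h: "\<tau> \<in> T \<Longrightarrow> integrable P (\<lambda>x. h \<tau> x * ln (h \<tau> x / w \<tau>))"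
  apply (rule finite_measure.integrable_const_bound[where B="1 + \<bar>ln (w \<tau>)\<bar>"])
  using P apply (simp add: prob_space_def)
   apply (auto intro!: ulnu_bound hnn h1 wpos)
  done

lemma mi_value: "mutual_info N fst Xt = ereal (\<Sum>\<tau>\<in>T. \<integral>x. h \<tau> x * ln (h \<tau> x / w \<tau>) \<partial>P)"
proof -
  let ?J = "distr N (borel \<Otimes>\<^sub>M borel) (\<lambda>\<omega>. (fst \<omega>, Xt \<omega>))"
  have d1: "distr ?J borel fst = P"
    by (subst distr_distr) (measurable, simp add: comp_def distrX)
  have d2: "distr ?J borel snd = density Ct (\<lambda>t. ennreal (WF t))"
    by (subst distr_distr) (measurable, simp add: comp_def distrXt)
  have prod: "P \<Otimes>\<^sub>M density Ct (\<lambda>t. ennreal (WF t)) = density (P \<Otimes>\<^sub>M Ct) (\<lambda>z. ennreal (WF (snd z)))"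
  proof -
    have "P \<Otimes>\<^sub>M density Ct (\<lambda>t. ennreal (WF t)) = density P (\<lambda>_. 1) \<Otimes>\<^sub>M density Ct (\<lambda>t. ennreal (WF t))"
      by (simp add: density_1)
    also have "\<dots> = density (P \<Otimes>\<^sub>M Ct) (\<lambda>(x, y). 1 * ennreal (WF y))"
      by (rule pair_measure_density) (measurable, auto intro: Ct_sf prob_space_imp_sigma_finite probXt)
    also have "\<dots> = density (P \<Otimes>\<^sub>M Ct) (\<lambda>z. ennreal (WF (snd z)))"
      by (rule density_cong) auto
    finally show ?thesis .
  qed
  have "mutual_info N fst Xt = kl_div_ext (density (P \<Otimes>\<^sub>M Ct) (\<lambda>z. ennreal (WF (snd z)))) (density (P \<Otimes>\<^sub>M Ct) (\<lambda>z. ennreal (G z)))"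
    unfolding mutual_info_def mi_joint_def d1 d2 prod by (simp only: J2_eq)
  also have "\<dots> = ereal (\<integral>z. G z * ln (G z / WF (snd z)) \<partial>(P \<Otimes>\<^sub>M Ct))"
  proof (rule KLD)
    show "sigma_finite_measure (P \<Otimes>\<^sub>M Ct)" by (rule sigma_finite_pair_measure[OF P_sf Ct_sf])
    show "AE z in P \<Otimes>\<^sub>M Ct. WF (snd z) = 0 \<longrightarrow> G z = 0"
    proof (rule AE_I2, intro impI)
      fix z :: "real \<times> real" assume "WF (snd z) = 0"
      then have "snd z \<notin> T" using WF_at wpos by force
      then show "G z = 0" using G_out[of "snd z" "fst z"] by simp
    qed
    show "finite_measure (density (P \<Otimes>\<^sub>M Ct) (\<lambda>z. ennreal (WF (snd z))))"
      unfolding prod[symmetric] using prob_space_pair[OF P probXt] by (simp add: prob_space_def)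
    show "integrable (P \<Otimes>\<^sub>M Ct) (\<lambda>z. G z * ln (G z / WF (snd z)))" by (rule int_main)
  qed (measurable, auto simp: G_nn WF_nn)
  also have "(\<integral>z. G z * ln (G z / WF (snd z)) \<partial>(P \<Otimes>\<^sub>M Ct)) = (\<integral>x. \<integral>t. G (x,t) * ln (G (x,t) / WF t) \<partial>Ct \<partial>P)"
  proof -
    interpret pair_sigma_finite P Ct
      by (intro pair_sigma_finite.intro P_sf Ct_sf)
    show ?thesis using integral_fst'[OF int_main] by simp
  qed
  also have "\<dots> = (\<integral>x. (\<Sum>\<tau>\<in>T. h \<tau> x * ln (h \<tau> x / w \<tau>)) \<partial>P)"
    apply (rule Bochner_Integration.integral_cong[OF refl])
    apply (subst Ct_lint)
     apply measurable
    by (auto intro!: sum.cong simp: G_at WF_at)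
  also have "\<dots> = (\<Sum>\<tau>\<in>T. \<integral>x. h \<tau> x * ln (h \<tau> x / w \<tau>) \<partial>P)"
    by (rule Bochner_Integration.integral_sum) (rule int_h)
  finally show ?thesis .
qed

end



lemma sq_split:
  fixes x y z \<eta> :: real
  assumes "0 < \<eta>"
  shows "(x - y)^2 \<le> (1 + \<eta>) * (x - z)^2 + (1 + 1 / \<eta>) * (y - z)^2"
proof -
  define a where "a = x - z"
  define b where "b = z - y"
  have xy: "x - y = a + b" unfolding a_def b_def by simp
  have yz: "(y - z)^2 = b^2" unfolding b_def by (simp add: power2_commute)
  have "0 \<le> (\<eta> * a - b)^2" by simp
  then have "2 * \<eta> * a * b \<le> \<eta>^2 * a^2 + b^2" by (simp add: power2_eq_square algebra_simps)
  then have "2 * a * b \<le> \<eta> * a^2 + b^2 / \<eta>" using assms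
    by (simp add: field_simps power2_eq_square)
  then have "(a + b)^2 \<le> (1 + \<eta>) * a^2 + (1 + 1 / \<eta>) * b^2"
    by (simp add: power2_eq_square algebra_simps)
  then show ?thesis unfolding xy yz a_def .
qed

lemma tangent:
  fixes u v :: real
  assumes "0 \<le> u" "0 < v"
  shows "u * (1 + ln v) - v \<le> u * ln u"
proof (cases "u = 0")
  case True then show ?thesis using assms by simp
next
  case False
  then have u: "0 < u" using assms by simp
  have "ln (v / u) \<le> v / u - 1" using u assms by (intro ln_le_minus_one) simp
  then have "ln v - ln u \<le> v / u - 1" using u assms by (simp add: ln_div)
  then have "u * (ln v - ln u) \<le> u * (v / u - 1)" using u by (intro mult_left_mono) auto
  then show ?thesis using u by (simp add: algebra_simps)
qed

lemma partition_sum: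
  assumes "finite I" "\<And>i j. i \<in> I \<Longrightarrow> j \<in> I \<Longrightarrow> i \<noteq> j \<Longrightarrow> C i \<inter> C j = {}" "\<exists>i\<in>I. y \<in> C i"
  shows "(\<Sum>i\<in>I. indicator (C i) y) = (1::'b::{comm_monoid_add, zero_neq_one})"
proof -
  obtain i where i: "i \<in> I" "y \<in> C i" using assms(3) by blast
  have "(\<Sum>i\<in>I. indicator (C i) y) = indicator (C i) y + (\<Sum>j\<in>I - {i}. indicator (C j) y)"
    using assms(1) i by (subst sum.remove[of I i]) auto
  also have "(\<Sum>j\<in>I - {i}. indicator (C j) y) = (0::'b)"
    using assms(2)[of i] i by (intro sum.neutral) (auto simp: indicator_def)
  finally show ?thesis using i by simp
qed

locale dp =
  fixes P :: "real measure" and f :: "real \<times> real \<Rightarrow> real" and I :: "'i set" and C :: "'i \<Rightarrow> real set"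
  assumes P: "prob_space P" and sP: "sets P = sets borel"
    and fm[measurable]: "f \<in> borel_measurable (borel \<Otimes>\<^sub>M borel)" and fnn: "\<And>z. 0 \<le> f z"
    and fint: "integrable (P \<Otimes>\<^sub>M P) (\<lambda>z. f z * ln (f z))"
    and fmarg: "AE x in P. (\<integral>\<^sup>+y. ennreal (f (x,y)) \<partial>P) = 1"
    and fmarg2: "AE y in P. (\<integral>\<^sup>+x. ennreal (f (x,y)) \<partial>P) = 1"
    and finI: "finite I" and Cm[measurable]: "\<And>i. C i \<in> sets borel"
    and Cdisj: "\<And>i j. i \<in> I \<Longrightarrow> j \<in> I \<Longrightarrow> i \<noteq> j \<Longrightarrow> C i \<inter> C j = {}"
    and Ccov: "\<And>y. \<exists>i\<in>I. y \<in> C i"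
begin

lemma sP'[measurable_cong]: "sets P = sets borel" by (rule sP)
lemma sPP[measurable_cong]: "sets (P \<Otimes>\<^sub>M P) = sets (borel \<Otimes>\<^sub>M borel)"
  by (intro sets_pair_measure_cong sP)

definition "p i = measure P (C i)"
definition "a i x = min 1 (enn2real (\<integral>\<^sup>+y. ennreal (f (x,y)) * indicator (C i) y \<partial>P))"
definition "I' = {i\<in>I. 0 < p i}"

lemma P_sf: "sigma_finite_measure P" using P by (simp add: prob_space_imp_sigma_finite)

lemma a_meas[measurable]: "a i \<in> borel_measurable borel"
proof -
  have "(\<lambda>x. \<integral>\<^sup>+y. ennreal (f (x,y)) * indicator (C i) y \<partial>P) \<in> borel_measurable borel"
    by (rule sigma_finite_measure.borel_measurable_nn_integral[OF P_sf]) measurable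
  then show ?thesis unfolding a_def by measurable
qed

lemma a_nn: "0 \<le> a i x" unfolding a_def by simp
lemma a_le1: "a i x \<le> 1" unfolding a_def by simp

lemma percell:
  fixes g :: "real \<Rightarrow> real" and Cs :: "real set"
  assumes gm[measurable]: "g \<in> borel_measurable borel" and gnn: "\<And>y. 0 \<le> g y"
    and gi: "integrable P g" and gl: "integrable P (\<lambda>y. g y * ln (g y))"
    and Csm[measurable]: "Cs \<in> sets borel" and pp: "0 < measure P Cs"
  shows "(\<integral>y. indicator Cs y * g y \<partial>P) * ln ((\<integral>y. indicator Cs y * g y \<partial>P) / measure P Cs)
         \<le> (\<integral>y. indicator Cs y * (g y * ln (g y)) \<partial>P)"
proof -
  define A where "A = (\<integral>y. indicator Cs y * g y \<partial>P)"
  define q where "q = measure P Cs"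
  have Cs': "Cs \<in> sets P" using sP by simp
  have iA: "integrable P (\<lambda>y. indicator Cs y * g y)"
    using integrable_mult_indicator[OF Cs' gi] by simp
  have iL: "integrable P (\<lambda>y. indicator Cs y * (g y * ln (g y)))"
    using integrable_mult_indicator[OF Cs' gl] by simp
  have Ann: "0 \<le> A" unfolding A_def by (rule integral_nonneg_AE) (auto simp: gnn)
  have key: "A * (1 + ln v) - v * q \<le> (\<integral>y. indicator Cs y * (g y * ln (g y)) \<partial>P)" if v: "0 < v" for v
  proof -
    have iI: "integrable P (indicator Cs :: real \<Rightarrow> real)"
      using P Cs' by (intro finite_measure.integrable_const_bound[where B=1]) (auto simp: prob_space_def)
    have "(\<integral>y. indicator Cs y * (g y * (1 + ln v) - v) \<partial>P) = (\<integral>y. (1 + ln v) * (indicator Cs y * g y) - v * indicator Cs y \<partial>P)"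
      by (rule Bochner_Integration.integral_cong) (auto simp: algebra_simps)
    also have "\<dots> = (1 + ln v) * A - v * q"
      using iA iI Cs' unfolding A_def q_def by (simp add: sets_eq_imp_space_eq[OF sP])
    finally have e: "(\<integral>y. indicator Cs y * (g y * (1 + ln v) - v) \<partial>P) = A * (1 + ln v) - v * q" by (simp add: mult.commute)
    have "(\<integral>y. indicator Cs y * (g y * (1 + ln v) - v) \<partial>P) \<le> (\<integral>y. indicator Cs y * (g y * ln (g y)) \<partial>P)"
    proof (rule integral_mono[OF _ iL])
      show "integrable P (\<lambda>y. indicator Cs y * (g y * (1 + ln v) - v))"
        using iA iI by (simp add: algebra_simps)
      fix y show "indicator Cs y * (g y * (1 + ln v) - v) \<le> indicator Cs y * (g y * ln (g y))"
        using tangent[OF gnn[of y] v] by (auto simp: indicator_def)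
    qed
    then show ?thesis using e by simp
  qed
  show ?thesis
  proof (cases "A = 0")
    case True
    have "0 \<le> (\<integral>y. indicator Cs y * (g y * ln (g y)) \<partial>P)"
    proof (rule ccontr)
      assume neg: "\<not> ?thesis"
      define X where "X = (\<integral>y. indicator Cs y * (g y * ln (g y)) \<partial>P)"
      have "A * (1 + ln (- X / (2 * q))) - (- X / (2 * q)) * q \<le> X"
        unfolding X_def using neg pp by (intro key) (auto simp: q_def X_def divide_neg_pos)
      then have "X / 2 \<le> X" using True pp by (simp add: q_def)
      then show False using neg X_def by simp
    qed
    then show ?thesis using True unfolding A_def[symmetric] by simp
  next
    case False
    then have Apos: "0 < A" using Ann by simp
    have "A * (1 + ln (A / q)) - (A / q) * q \<le> (\<integral>y. indicator Cs y * (g y * ln (g y)) \<partial>P)"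
      using Apos pp by (intro key) (simp add: q_def)
    then show ?thesis using pp unfolding A_def[symmetric] q_def[symmetric] by (simp add: algebra_simps)
  qed
qed


lemma PP_psf: "pair_sigma_finite P P"
  by (intro pair_sigma_finite.intro P_sf)

lemma p_nn: "0 \<le> p i" unfolding p_def by simp

lemma null_cell: "i \<notin> I' \<Longrightarrow> i \<in> I \<Longrightarrow> u \<in> borel_measurable borel \<Longrightarrow> (\<integral>y. indicator (C i) y * (u y :: real) \<partial>P) = 0"
proof -
  assume "i \<notin> I'" "i \<in> I" and um[measurable]: "u \<in> borel_measurable borel"
  then have "p i = 0" using p_nn[of i] unfolding I'_def by auto
  moreover have Ci: "C i \<in> sets P" using sP by simp
  ultimately have "emeasure P (C i) = 0" unfolding p_def
    using finite_measure.emeasure_eq_measure[OF prob_space.finite_measure[OF P]] by simp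
  then have "C i \<in> null_sets P" using Ci by (simp add: null_sets_def)
  then have "AE y in P. y \<notin> C i" by (rule AE_not_in)
  then have "AE y in P. indicator (C i) y * u y = 0" by eventually_elim auto
  then show ?thesis by (subst integral_cong_AE[where g="\<lambda>_. 0"]) auto
qed

lemma pointwise:
  assumes m1: "(\<integral>\<^sup>+y. ennreal (f (x,y)) \<partial>P) = 1"
    and il: "integrable P (\<lambda>y. f (x,y) * ln (f (x,y)))"
  shows "(\<Sum>i\<in>I'. a i x * ln (a i x / p i)) \<le> (\<integral>y. f (x,y) * ln (f (x,y)) \<partial>P)"
proof -
  define g where "g y = f (x,y)" for y
  have gm[measurable]: "g \<in> borel_measurable borel" unfolding g_def by measurable
  have gnn: "0 \<le> g y" for y unfolding g_def by (rule fnn)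
  have gi: "integrable P g"
    by (rule integrableI_nn_integral_finite[where x=1]) (use m1 gnn in \<open>auto simp: g_def\<close>)
  have g1: "(\<integral>y. g y \<partial>P) = 1"
  proof -
    have "(\<integral>\<^sup>+ y. ennreal (g y) \<partial>P) = ennreal (\<integral>y. g y \<partial>P)" by (rule nn_integral_eq_integral[OF gi]) (simp add: gnn)
    moreover have "(\<integral>\<^sup>+ y. ennreal (g y) \<partial>P) = 1" using m1 by (simp add: g_def)
    ultimately have "ennreal (\<integral>y. g y \<partial>P) = 1" by simp
    then show ?thesis by (simp add: ennreal_eq_1)
  qed
  have aeq: "a i x = (\<integral>y. indicator (C i) y * g y \<partial>P)" for i
  proof -
    have Ci: "C i \<in> sets P" using sP by simp
    have ii: "integrable P (\<lambda>y. indicator (C i) y * g y)" using integrable_mult_indicator[OF Ci gi] by simp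
    have "(\<integral>\<^sup>+y. ennreal (f (x,y)) * indicator (C i) y \<partial>P) = (\<integral>\<^sup>+y. ennreal (indicator (C i) y * g y) \<partial>P)"
      by (rule nn_integral_cong) (auto simp: g_def indicator_def)
    also have "\<dots> = ennreal (\<integral>y. indicator (C i) y * g y \<partial>P)"
      by (rule nn_integral_eq_integral[OF ii]) (auto simp: gnn)
    finally have e: "enn2real (\<integral>\<^sup>+y. ennreal (f (x,y)) * indicator (C i) y \<partial>P) = (\<integral>y. indicator (C i) y * g y \<partial>P)"
      using gnn by (simp add: integral_nonneg_AE)
    have "(\<integral>y. indicator (C i) y * g y \<partial>P) \<le> (\<integral>y. g y \<partial>P)"
      by (rule integral_mono[OF ii gi]) (auto simp: indicator_def gnn)
    then show ?thesis unfolding a_def e using g1 by simp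
  qed
  have gl: "integrable P (\<lambda>y. g y * ln (g y))" using il by (simp add: g_def)
  have "(\<Sum>i\<in>I'. a i x * ln (a i x / p i)) \<le> (\<Sum>i\<in>I'. \<integral>y. indicator (C i) y * (g y * ln (g y)) \<partial>P)"
  proof (rule sum_mono)
    fix i assume "i \<in> I'"
    then have pp: "0 < measure P (C i)" unfolding I'_def p_def by auto
    show "a i x * ln (a i x / p i) \<le> (\<integral>y. indicator (C i) y * (g y * ln (g y)) \<partial>P)"
      unfolding aeq p_def by (rule percell[OF gm gnn gi gl Cm pp])
  qed
  also have "\<dots> = (\<Sum>i\<in>I. \<integral>y. indicator (C i) y * (g y * ln (g y)) \<partial>P)"
    by (rule sum.mono_neutral_left) (use finI null_cell[where u="\<lambda>y. g y * ln (g y)"] in \<open>auto simp: I'_def\<close>)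
  also have "\<dots> = (\<integral>y. (\<Sum>i\<in>I. indicator (C i) y * (g y * ln (g y))) \<partial>P)"
  proof (rule Bochner_Integration.integral_sum[symmetric])
    fix i assume "i \<in> I"
    have Ci: "C i \<in> sets P" using sP by simp
    show "integrable P (\<lambda>y. indicator (C i) y * (g y * ln (g y)))" using integrable_mult_indicator[OF Ci gl] by simp
  qed
  also have "\<dots> = (\<integral>y. g y * ln (g y) \<partial>P)"
  proof (rule Bochner_Integration.integral_cong[OF refl])
    fix y
    have "(\<Sum>i\<in>I. indicator (C i) y * (g y * ln (g y))) = (\<Sum>i\<in>I. indicator (C i) y) * (g y * ln (g y))"
      by (simp add: sum_distrib_right)
    also have "(\<Sum>i\<in>I. indicator (C i) y :: real) = 1" by (rule partition_sum[OF finI Cdisj Ccov])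
    hence "(\<Sum>i\<in>I. indicator (C i) y) * (g y * ln (g y)) = g y * ln (g y)" by simp
    finally show "(\<Sum>i\<in>I. indicator (C i) y * (g y * ln (g y))) = g y * ln (g y)" by simp
  qed
  finally show ?thesis by (simp add: g_def)
qed

lemma dp_ineq: "(\<Sum>i\<in>I'. \<integral>x. a i x * ln (a i x / p i) \<partial>P) \<le> (\<integral>z. f z * ln (f z) \<partial>(P \<Otimes>\<^sub>M P))"
proof -
  interpret pair_sigma_finite P P by (rule PP_psf)
  have fl[measurable]: "(\<lambda>z. f z * ln (f z)) \<in> borel_measurable (P \<Otimes>\<^sub>M P)" by measurable
  have ia: "integrable P (\<lambda>x. a i x * ln (a i x / p i))" if "i \<in> I'" for i
  proof -
    have pp: "0 < p i" using that unfolding I'_def by auto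
    show ?thesis
      apply (rule finite_measure.integrable_const_bound[where B="1 + \<bar>ln (p i)\<bar>"])
      using P apply (simp add: prob_space_def)
       apply (auto intro!: ulnu_bound a_nn a_le1 pp)
      done
  qed
  have "(\<Sum>i\<in>I'. \<integral>x. a i x * ln (a i x / p i) \<partial>P) = (\<integral>x. (\<Sum>i\<in>I'. a i x * ln (a i x / p i)) \<partial>P)"
    by (rule Bochner_Integration.integral_sum[symmetric]) (rule ia)
  also have "\<dots> \<le> (\<integral>x. \<integral>y. f (x,y) * ln (f (x,y)) \<partial>P \<partial>P)"
  proof (rule integral_mono_AE)
    show "integrable P (\<lambda>x. \<Sum>i\<in>I'. a i x * ln (a i x / p i))" by (rule Bochner_Integration.integrable_sum) (rule ia)
    show "integrable P (\<lambda>x. \<integral>y. f (x,y) * ln (f (x,y)) \<partial>P)"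
      using integrable_fst'[OF fint] by simp
    show "AE x in P. (\<Sum>i\<in>I'. a i x * ln (a i x / p i)) \<le> (\<integral>y. f (x,y) * ln (f (x,y)) \<partial>P)"
      using fmarg AE_integrable_fst'[OF fint]
      by eventually_elim (rule pointwise, auto)
  qed
  also have "\<dots> = (\<integral>z. f z * ln (f z) \<partial>(P \<Otimes>\<^sub>M P))"
    using integral_fst'[OF fint] by simp
  finally show ?thesis .
qed


definition "Dc i = (\<integral>\<^sup>+x. \<integral>\<^sup>+y. ennreal ((x - y)^2) * ennreal (f (x,y)) * indicator (C i) y \<partial>P \<partial>P)"
definition "Vc i = (\<integral>\<^sup>+y. \<integral>\<^sup>+y'. ennreal ((y - y')^2) * indicator (C i) y * indicator (C i) y' \<partial>P \<partial>P)"

lemma a_le_enn: "ennreal (a i x) \<le> (\<integral>\<^sup>+y. ennreal (f (x,y)) * indicator (C i) y \<partial>P)"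
proof (cases "(\<integral>\<^sup>+y. ennreal (f (x,y)) * indicator (C i) y \<partial>P) = \<infinity>")
  case True then show ?thesis by simp
next
  case False
  have "ennreal (a i x) \<le> ennreal (enn2real (\<integral>\<^sup>+y. ennreal (f (x,y)) * indicator (C i) y \<partial>P))"
    unfolding a_def by (intro ennreal_leI) simp
  also have "\<dots> = (\<integral>\<^sup>+y. ennreal (f (x,y)) * indicator (C i) y \<partial>P)"
    using False by (simp add: less_top)
  finally show ?thesis .
qed

lemma cell_dist:
  assumes i: "i \<in> I'" and c: "0 \<le> c" and eta: "0 < \<eta>"
  shows "(\<integral>\<^sup>+x. \<integral>\<^sup>+y. ennreal ((x - y)^2) * ennreal (c * a i x * indicator (C i) y / p i) \<partial>P \<partial>P)
    \<le> ennreal c * (ennreal (1 + \<eta>) * Dc i + ennreal (1 + 1 / \<eta>) * ennreal (1 / p i) * Vc i)"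
proof -
  have pp: "0 < p i" using i unfolding I'_def by auto
  define K where "K = ennreal c * ennreal (1 / p i)"
  define Ci where "Ci = C i"
  have Cim[measurable]: "Ci \<in> sets borel" unfolding Ci_def by simp
  have pCi: "emeasure P Ci = ennreal (p i)"
    unfolding Ci_def p_def using sP by (simp add: finite_measure.emeasure_eq_measure[OF prob_space.finite_measure[OF P]])
  define A where "A x = (\<integral>\<^sup>+y'. ennreal (f (x,y')) * indicator Ci y' \<partial>P)" for x
  have Am[measurable]: "A \<in> borel_measurable borel"
    unfolding A_def by (rule sigma_finite_measure.borel_measurable_nn_integral[OF P_sf]) measurable
  have step1: "(\<integral>\<^sup>+x. \<integral>\<^sup>+y. ennreal ((x - y)^2) * ennreal (c * a i x * indicator (C i) y / p i) \<partial>P \<partial>P)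
      \<le> (\<integral>\<^sup>+x. \<integral>\<^sup>+y. K * (ennreal ((x - y)^2) * indicator Ci y * A x) \<partial>P \<partial>P)"
  proof (intro nn_integral_mono)
    fix x y
    have "ennreal (c * a i x * indicator (C i) y / p i) = K * indicator Ci y * ennreal (a i x)"
      unfolding K_def Ci_def using c pp a_nn[of i x]
      by (simp add: ennreal_mult'[symmetric] ennreal_indicator[symmetric] del: ennreal_indicator)
    also have "\<dots> \<le> K * indicator Ci y * A x"
      unfolding A_def Ci_def by (intro mult_left_mono a_le_enn) auto
    finally have le: "ennreal (c * a i x * indicator (C i) y / p i) \<le> K * indicator Ci y * A x" .
    have "ennreal ((x - y)^2) * ennreal (c * a i x * indicator (C i) y / p i) \<le> ennreal ((x - y)^2) * (K * indicator Ci y * A x)"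
      by (rule mult_left_mono[OF le]) simp
    then show "ennreal ((x - y)^2) * ennreal (c * a i x * indicator (C i) y / p i) \<le> K * (ennreal ((x - y)^2) * indicator Ci y * A x)"
      by (simp add: mult_ac)
  qed
  have step2: "(\<integral>\<^sup>+x. \<integral>\<^sup>+y. K * (ennreal ((x - y)^2) * indicator Ci y * A x) \<partial>P \<partial>P)
      = K * (\<integral>\<^sup>+x. \<integral>\<^sup>+y. ennreal ((x - y)^2) * indicator Ci y * A x \<partial>P \<partial>P)"
  proof -
    have m: "(\<lambda>x. \<integral>\<^sup>+y. ennreal ((x - y)^2) * indicator Ci y * A x \<partial>P) \<in> borel_measurable P"
      by (rule sigma_finite_measure.borel_measurable_nn_integral[OF P_sf]) measurable
    show ?thesis
      by (subst nn_integral_cmult[symmetric, OF m]) (auto intro!: nn_integral_cong nn_integral_cmult)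
  qed
  define a1 where "a1 = ennreal (1 + \<eta>)"
  define a2 where "a2 = ennreal (1 + 1 / \<eta>)"
  define T1 where "T1 x = (\<integral>\<^sup>+y. \<integral>\<^sup>+y'. ennreal ((x - y')^2) * indicator Ci y * ennreal (f (x,y')) * indicator Ci y' \<partial>P \<partial>P)" for x
  define T2 where "T2 x = (\<integral>\<^sup>+y. \<integral>\<^sup>+y'. ennreal ((y - y')^2) * indicator Ci y * ennreal (f (x,y')) * indicator Ci y' \<partial>P \<partial>P)" for x
  have T1m[measurable]: "T1 \<in> borel_measurable borel"
  proof -
    have "(\<lambda>z. \<integral>\<^sup>+y'. ennreal ((fst z - y')^2) * indicator Ci (snd z) * ennreal (f (fst z,y')) * indicator Ci y' \<partial>P) \<in> borel_measurable (borel \<Otimes>\<^sub>M P)"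
      by (rule sigma_finite_measure.borel_measurable_nn_integral[OF P_sf]) measurable
    then have "(\<lambda>z. \<integral>\<^sup>+y'. ennreal ((fst z - y')^2) * indicator Ci (snd z) * ennreal (f (fst z,y')) * indicator Ci y' \<partial>P) \<in> borel_measurable (borel \<Otimes>\<^sub>M P)" .
    then show ?thesis unfolding T1_def
      by (intro sigma_finite_measure.borel_measurable_nn_integral[OF P_sf]) (simp add: split_beta')
  qed
  have T2m[measurable]: "T2 \<in> borel_measurable borel"
  proof -
    have "(\<lambda>z. \<integral>\<^sup>+y'. ennreal ((snd z - y')^2) * indicator Ci (snd z) * ennreal (f (fst z,y')) * indicator Ci y' \<partial>P) \<in> borel_measurable (borel \<Otimes>\<^sub>M P)"
      by (rule sigma_finite_measure.borel_measurable_nn_integral[OF P_sf]) measurable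
    then show ?thesis unfolding T2_def
      by (intro sigma_finite_measure.borel_measurable_nn_integral[OF P_sf]) (simp add: split_beta')
  qed
  have step3: "(\<integral>\<^sup>+y. ennreal ((x - y)^2) * indicator Ci y * A x \<partial>P) \<le> a1 * T1 x + a2 * T2 x" for x
  proof -
    have "(\<integral>\<^sup>+y. ennreal ((x - y)^2) * indicator Ci y * A x \<partial>P)
        = (\<integral>\<^sup>+y. \<integral>\<^sup>+y'. ennreal ((x - y)^2) * indicator Ci y * ennreal (f (x,y')) * indicator Ci y' \<partial>P \<partial>P)"
      unfolding A_def by (intro nn_integral_cong) (subst nn_integral_cmult[symmetric], measurable, simp add: mult_ac)
    also have "\<dots> \<le> (\<integral>\<^sup>+y. \<integral>\<^sup>+y'. a1 * (ennreal ((x - y')^2) * indicator Ci y * ennreal (f (x,y')) * indicator Ci y')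
                  + a2 * (ennreal ((y - y')^2) * indicator Ci y * ennreal (f (x,y')) * indicator Ci y') \<partial>P \<partial>P)"
    proof (intro nn_integral_mono)
      fix y y'
      have "ennreal ((x - y)^2) \<le> ennreal ((1 + \<eta>) * (x - y')^2 + (1 + 1 / \<eta>) * (y - y')^2)"
        by (intro ennreal_leI sq_split eta)
      also have "\<dots> = a1 * ennreal ((x - y')^2) + a2 * ennreal ((y - y')^2)"
        unfolding a1_def a2_def using eta by (simp add: ennreal_plus[symmetric] ennreal_mult[symmetric] del: ennreal_plus)
      finally have "ennreal ((x - y)^2) \<le> a1 * ennreal ((x - y')^2) + a2 * ennreal ((y - y')^2)" .
      then have "ennreal ((x - y)^2) * (indicator Ci y * ennreal (f (x,y')) * indicator Ci y') \<le> (a1 * ennreal ((x - y')^2) + a2 * ennreal ((y - y')^2)) * (indicator Ci y * ennreal (f (x,y')) * indicator Ci y')"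
        by (rule mult_right_mono) simp
      then show "ennreal ((x - y)^2) * indicator Ci y * ennreal (f (x,y')) * indicator Ci y' \<le> a1 * (ennreal ((x - y')^2) * indicator Ci y * ennreal (f (x,y')) * indicator Ci y')
                  + a2 * (ennreal ((y - y')^2) * indicator Ci y * ennreal (f (x,y')) * indicator Ci y')"
        by (simp add: algebra_simps)
    qed
    also have "\<dots> = a1 * T1 x + a2 * T2 x"
    proof -
      have m1: "(\<lambda>y. \<integral>\<^sup>+y'. a1 * (ennreal ((x - y')^2) * indicator Ci y * ennreal (f (x,y')) * indicator Ci y') \<partial>P) \<in> borel_measurable P"
        by (rule sigma_finite_measure.borel_measurable_nn_integral[OF P_sf]) measurable
      have m2: "(\<lambda>y. \<integral>\<^sup>+y'. a2 * (ennreal ((y - y')^2) * indicator Ci y * ennreal (f (x,y')) * indicator Ci y') \<partial>P) \<in> borel_measurable P"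
        by (rule sigma_finite_measure.borel_measurable_nn_integral[OF P_sf]) measurable
      have "(\<integral>\<^sup>+y. \<integral>\<^sup>+y'. a1 * (ennreal ((x - y')^2) * indicator Ci y * ennreal (f (x,y')) * indicator Ci y')
                  + a2 * (ennreal ((y - y')^2) * indicator Ci y * ennreal (f (x,y')) * indicator Ci y') \<partial>P \<partial>P)
          = (\<integral>\<^sup>+y. (\<integral>\<^sup>+y'. a1 * (ennreal ((x - y')^2) * indicator Ci y * ennreal (f (x,y')) * indicator Ci y') \<partial>P)
                  + (\<integral>\<^sup>+y'. a2 * (ennreal ((y - y')^2) * indicator Ci y * ennreal (f (x,y')) * indicator Ci y') \<partial>P) \<partial>P)"
        by (intro nn_integral_cong nn_integral_add) measurable
      also have "\<dots> = (\<integral>\<^sup>+y. (\<integral>\<^sup>+y'. a1 * (ennreal ((x - y')^2) * indicator Ci y * ennreal (f (x,y')) * indicator Ci y') \<partial>P) \<partial>P)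
                  + (\<integral>\<^sup>+y. (\<integral>\<^sup>+y'. a2 * (ennreal ((y - y')^2) * indicator Ci y * ennreal (f (x,y')) * indicator Ci y') \<partial>P) \<partial>P)"
        by (rule nn_integral_add[OF m1 m2])
      also have "\<dots> = a1 * T1 x + a2 * T2 x"
        unfolding T1_def T2_def
        apply (subst (1 2) nn_integral_cmult[symmetric])
          apply (rule sigma_finite_measure.borel_measurable_nn_integral[OF P_sf], measurable)+
        apply (intro arg_cong2[where f="(+)"] nn_integral_cong)
         apply (subst nn_integral_cmult; simp)
        apply (subst nn_integral_cmult; simp)
        done
      finally show ?thesis .
    qed
    finally show ?thesis .
  qed
  have iT1: "(\<integral>\<^sup>+x. T1 x \<partial>P) = ennreal (p i) * Dc i"
  proof -
    define Q where "Q x = (\<integral>\<^sup>+y'. ennreal ((x - y')^2) * ennreal (f (x,y')) * indicator Ci y' \<partial>P)" for x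
    have Qm[measurable]: "Q \<in> borel_measurable borel"
      unfolding Q_def by (rule sigma_finite_measure.borel_measurable_nn_integral[OF P_sf]) measurable
    have "T1 x = ennreal (p i) * Q x" for x
    proof -
      have "T1 x = (\<integral>\<^sup>+y. indicator Ci y * Q x \<partial>P)"
        unfolding T1_def Q_def
        by (intro nn_integral_cong) (subst nn_integral_cmult[symmetric], measurable, simp add: mult_ac)
      also have "\<dots> = Q x * emeasure P Ci"
        by (subst nn_integral_multc) (use sP in \<open>auto simp: mult.commute\<close>)
      finally show ?thesis using pCi by (simp add: mult.commute)
    qed
    then have "(\<integral>\<^sup>+x. T1 x \<partial>P) = ennreal (p i) * (\<integral>\<^sup>+x. Q x \<partial>P)"
      by (simp add: nn_integral_cmult)
    then show ?thesis unfolding Dc_def Q_def Ci_def .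
  qed
  have iT2: "(\<integral>\<^sup>+x. T2 x \<partial>P) = Vc i"
  proof -
    interpret pair_sigma_finite P P by (rule PP_psf)
    define \<psi> where "\<psi> x y y' = ennreal ((y - y')^2) * indicator Ci y * ennreal (f (x,y')) * indicator Ci y'" for x y y'
    have \<psi>m: "(\<lambda>z. \<psi> (fst z) (snd z) y') \<in> borel_measurable (P \<Otimes>\<^sub>M P)" for y' unfolding \<psi>_def by measurable
    have \<Phi>m: "(\<lambda>(x, y). \<integral>\<^sup>+y'. \<psi> x y y' \<partial>P) \<in> borel_measurable (P \<Otimes>\<^sub>M P)"
    proof -
      have "(\<lambda>z. \<integral>\<^sup>+y'. \<psi> (fst z) (snd z) y' \<partial>P) \<in> borel_measurable (P \<Otimes>\<^sub>M P)"
        by (rule sigma_finite_measure.borel_measurable_nn_integral[OF P_sf]) (unfold \<psi>_def, measurable)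
      then show ?thesis by (simp add: split_beta')
    qed
    have "(\<integral>\<^sup>+x. T2 x \<partial>P) = (\<integral>\<^sup>+x. \<integral>\<^sup>+y. \<integral>\<^sup>+y'. \<psi> x y y' \<partial>P \<partial>P \<partial>P)"
      unfolding T2_def \<psi>_def ..
    also have "\<dots> = (\<integral>\<^sup>+y. \<integral>\<^sup>+x. \<integral>\<^sup>+y'. \<psi> x y y' \<partial>P \<partial>P \<partial>P)"
      using Fubini'[OF \<Phi>m] by simp
    also have "\<dots> = (\<integral>\<^sup>+y. \<integral>\<^sup>+y'. \<integral>\<^sup>+x. \<psi> x y y' \<partial>P \<partial>P \<partial>P)"
    proof (rule nn_integral_cong)
      fix y
      have m: "(\<lambda>(x, y'). \<psi> x y y') \<in> borel_measurable (P \<Otimes>\<^sub>M P)" unfolding \<psi>_def by measurable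
      show "(\<integral>\<^sup>+x. \<integral>\<^sup>+y'. \<psi> x y y' \<partial>P \<partial>P) = (\<integral>\<^sup>+y'. \<integral>\<^sup>+x. \<psi> x y y' \<partial>P \<partial>P)"
        using Fubini'[OF m] by simp
    qed
    also have "\<dots> = (\<integral>\<^sup>+y. \<integral>\<^sup>+y'. ennreal ((y - y')^2) * indicator Ci y * indicator Ci y' \<partial>P \<partial>P)"
    proof (rule nn_integral_cong)
      fix y
      show "(\<integral>\<^sup>+y'. \<integral>\<^sup>+x. \<psi> x y y' \<partial>P \<partial>P) = (\<integral>\<^sup>+y'. ennreal ((y - y')^2) * indicator Ci y * indicator Ci y' \<partial>P)"
      proof (rule nn_integral_cong_AE)
        show "AE y' in P. (\<integral>\<^sup>+x. \<psi> x y y' \<partial>P) = ennreal ((y - y')^2) * indicator Ci y * indicator Ci y'"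
          using fmarg2
        proof eventually_elim
          case (elim y')
          have "(\<integral>\<^sup>+x. \<psi> x y y' \<partial>P) = (\<integral>\<^sup>+x. (ennreal ((y - y')^2) * indicator Ci y * indicator Ci y') * ennreal (f (x,y')) \<partial>P)"
            unfolding \<psi>_def by (simp add: mult_ac)
          also have "\<dots> = ennreal ((y - y')^2) * indicator Ci y * indicator Ci y' * (\<integral>\<^sup>+x. ennreal (f (x,y')) \<partial>P)"
            by (rule nn_integral_cmult) measurable
          finally show ?case using elim by simp
        qed
      qed
    qed
    finally show ?thesis unfolding Vc_def Ci_def .
  qed
  have "(\<integral>\<^sup>+x. \<integral>\<^sup>+y. ennreal ((x - y)^2) * indicator Ci y * A x \<partial>P \<partial>P) \<le> (\<integral>\<^sup>+x. a1 * T1 x + a2 * T2 x \<partial>P)"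
    by (intro nn_integral_mono step3)
  also have "\<dots> = a1 * (ennreal (p i) * Dc i) + a2 * Vc i"
    by (simp add: nn_integral_add nn_integral_cmult iT1 iT2)
  finally have step4: "(\<integral>\<^sup>+x. \<integral>\<^sup>+y. ennreal ((x - y)^2) * indicator Ci y * A x \<partial>P \<partial>P) \<le> a1 * (ennreal (p i) * Dc i) + a2 * Vc i" .
  have "(\<integral>\<^sup>+x. \<integral>\<^sup>+y. ennreal ((x - y)^2) * ennreal (c * a i x * indicator (C i) y / p i) \<partial>P \<partial>P)
     \<le> K * (\<integral>\<^sup>+x. \<integral>\<^sup>+y. ennreal ((x - y)^2) * indicator Ci y * A x \<partial>P \<partial>P)"
    using step1 step2 by simp
  also have "\<dots> \<le> K * (a1 * (ennreal (p i) * Dc i) + a2 * Vc i)"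
    by (rule mult_left_mono[OF step4]) simp
  also have "\<dots> = ennreal c * (a1 * Dc i + a2 * ennreal (1 / p i) * Vc i)"
  proof -
    have pp1: "ennreal (1 / p i) * ennreal (p i) = 1" using pp by (simp add: ennreal_mult[symmetric])
    have "K * (a1 * (ennreal (p i) * Dc i) + a2 * Vc i) = ennreal c * (a1 * Dc i * (ennreal (1 / p i) * ennreal (p i)) + a2 * ennreal (1 / p i) * Vc i)"
      unfolding K_def by (simp add: algebra_simps)
    then show ?thesis using pp1 by simp
  qed
  finally show ?thesis unfolding a1_def a2_def .
qed


lemma a_enn_AE: "AE x in P. \<forall>i. ennreal (a i x) = (\<integral>\<^sup>+y. ennreal (f (x,y)) * indicator (C i) y \<partial>P)"
  using fmarg
proof eventually_elim
  case (elim x)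
  show ?case
  proof
    fix i
    define J where "J = (\<integral>\<^sup>+y. ennreal (f (x,y)) * indicator (C i) y \<partial>P)"
    have "J \<le> (\<integral>\<^sup>+y. ennreal (f (x,y)) \<partial>P)" unfolding J_def
      by (intro nn_integral_mono) (simp add: indicator_def)
    then have J1: "J \<le> 1" using elim by simp
    have Jt: "J < \<infinity>" by (rule le_less_trans[OF J1]) simp
    have "enn2real J \<le> 1" using J1 Jt by (simp add: enn2real_leI)
    then have "a i x = enn2real J" unfolding a_def J_def by simp
    then show "ennreal (a i x) = J" using Jt by (simp add: less_top)
  qed
qed

lemma a_int: "(\<integral>\<^sup>+x. ennreal (a i x) \<partial>P) = ennreal (p i)"
proof -
  interpret pair_sigma_finite P P by (rule PP_psf)
  have "(\<integral>\<^sup>+x. ennreal (a i x) \<partial>P) = (\<integral>\<^sup>+x. \<integral>\<^sup>+y. ennreal (f (x,y)) * indicator (C i) y \<partial>P \<partial>P)"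
    by (rule nn_integral_cong_AE) (use a_enn_AE in \<open>auto elim: AE_mp\<close>)
  also have "\<dots> = (\<integral>\<^sup>+y. \<integral>\<^sup>+x. ennreal (f (x,y)) * indicator (C i) y \<partial>P \<partial>P)"
  proof -
    have m: "(\<lambda>(x, y). ennreal (f (x,y)) * indicator (C i) y) \<in> borel_measurable (P \<Otimes>\<^sub>M P)" by measurable
    show ?thesis using Fubini'[OF m] by simp
  qed
  also have "\<dots> = (\<integral>\<^sup>+y. indicator (C i) y \<partial>P)"
  proof (rule nn_integral_cong_AE)
    show "AE y in P. (\<integral>\<^sup>+x. ennreal (f (x,y)) * indicator (C i) y \<partial>P) = indicator (C i) y"
      using fmarg2
    proof eventually_elim
      case (elim y)
      have "(\<integral>\<^sup>+x. ennreal (f (x,y)) * indicator (C i) y \<partial>P) = (\<integral>\<^sup>+x. ennreal (f (x,y)) \<partial>P) * indicator (C i) y"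
        by (rule nn_integral_multc) measurable
      then show ?case using elim by simp
    qed
  qed
  also have "\<dots> = ennreal (p i)"
    unfolding p_def using sP by (simp add: finite_measure.emeasure_eq_measure[OF prob_space.finite_measure[OF P]])
  finally show ?thesis .
qed

lemma a_zero_AE: "i \<in> I \<Longrightarrow> i \<notin> I' \<Longrightarrow> AE x in P. a i x = 0"
proof -
  assume "i \<in> I" "i \<notin> I'"
  then have "p i = 0" using p_nn[of i] unfolding I'_def by auto
  then have "(\<integral>\<^sup>+x. ennreal (a i x) \<partial>P) = 0" using a_int by simp
  then have "AE x in P. ennreal (a i x) = 0" by (subst (asm) nn_integral_0_iff_AE) auto
  then show ?thesis
  proof eventually_elim
    case (elim x)
    then have "a i x \<le> 0" by (simp add: ennreal_eq_0_iff)
    then show ?case using a_nn[of i x] by linarith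
  qed
qed

lemma a_sum: "AE x in P. (\<Sum>i\<in>I'. a i x) = 1"
proof -
  have z: "AE x in P. \<forall>i\<in>I - I'. a i x = 0"
    using finI by (subst AE_finite_all) (auto intro: a_zero_AE)
  show ?thesis using z a_enn_AE fmarg
  proof eventually_elim
    case (elim x)
    have "(\<Sum>i\<in>I'. a i x) = (\<Sum>i\<in>I. a i x)"
      by (rule sum.mono_neutral_left) (use finI elim in \<open>auto simp: I'_def\<close>)
    moreover have "ennreal (\<Sum>i\<in>I. a i x) = 1"
    proof -
      have "ennreal (\<Sum>i\<in>I. a i x) = (\<Sum>i\<in>I. ennreal (a i x))" by (rule sum_ennreal[symmetric]) (simp add: a_nn)
      also have "\<dots> = (\<Sum>i\<in>I. \<integral>\<^sup>+y. ennreal (f (x,y)) * indicator (C i) y \<partial>P)" using elim by simp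
      also have "\<dots> = (\<integral>\<^sup>+y. (\<Sum>i\<in>I. ennreal (f (x,y)) * indicator (C i) y) \<partial>P)"
        by (rule nn_integral_sum[symmetric]) measurable
      also have "\<dots> = (\<integral>\<^sup>+y. ennreal (f (x,y)) \<partial>P)"
      proof (rule nn_integral_cong)
        fix y
        have "(\<Sum>i\<in>I. indicator (C i) y :: ennreal) = 1" by (rule partition_sum[OF finI Cdisj Ccov])
        moreover have "(\<Sum>i\<in>I. ennreal (f (x,y)) * indicator (C i) y) = ennreal (f (x,y)) * (\<Sum>i\<in>I. indicator (C i) y)"
          by (rule sum_distrib_left[symmetric])
        ultimately show "(\<Sum>i\<in>I. ennreal (f (x,y)) * indicator (C i) y) = ennreal (f (x,y))" by simp
      qed
      finally show ?thesis using elim by simp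
    qed
    ultimately show ?case using a_nn by (simp add: ennreal_eq_1 sum_nonneg)
  qed
qed

lemma Dc_sum: "(\<Sum>i\<in>I'. Dc i) \<le> (\<integral>\<^sup>+x. \<integral>\<^sup>+y. ennreal ((x - y)^2) * ennreal (f (x,y)) \<partial>P \<partial>P)"
proof -
  have sub: "I' \<subseteq> I" unfolding I'_def by blast
  have "(\<Sum>i\<in>I'. Dc i) \<le> (\<Sum>i\<in>I. Dc i)"
    by (rule sum_mono2[OF finI sub]) simp
  also have "\<dots> = (\<integral>\<^sup>+x. (\<Sum>i\<in>I. \<integral>\<^sup>+y. ennreal ((x - y)^2) * ennreal (f (x,y)) * indicator (C i) y \<partial>P) \<partial>P)"
    unfolding Dc_def
    by (rule nn_integral_sum[symmetric]) (rule sigma_finite_measure.borel_measurable_nn_integral[OF P_sf], measurable)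
  also have "\<dots> = (\<integral>\<^sup>+x. \<integral>\<^sup>+y. ennreal ((x - y)^2) * ennreal (f (x,y)) \<partial>P \<partial>P)"
  proof (rule nn_integral_cong)
    fix x
    have "(\<Sum>i\<in>I. \<integral>\<^sup>+y. ennreal ((x - y)^2) * ennreal (f (x,y)) * indicator (C i) y \<partial>P)
        = (\<integral>\<^sup>+y. (\<Sum>i\<in>I. ennreal ((x - y)^2) * ennreal (f (x,y)) * indicator (C i) y) \<partial>P)"
      by (rule nn_integral_sum[symmetric]) measurable
    also have "\<dots> = (\<integral>\<^sup>+y. ennreal ((x - y)^2) * ennreal (f (x,y)) \<partial>P)"
    proof (rule nn_integral_cong)
      fix y
      have "(\<Sum>i\<in>I. indicator (C i) y :: ennreal) = 1" by (rule partition_sum[OF finI Cdisj Ccov])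
      moreover have "(\<Sum>i\<in>I. ennreal ((x - y)^2) * ennreal (f (x,y)) * indicator (C i) y) = ennreal ((x - y)^2) * ennreal (f (x,y)) * (\<Sum>i\<in>I. indicator (C i) y)"
        by (rule sum_distrib_left[symmetric])
      ultimately show "(\<Sum>i\<in>I. ennreal ((x - y)^2) * ennreal (f (x,y)) * indicator (C i) y) = ennreal ((x - y)^2) * ennreal (f (x,y))" by simp
    qed
    finally show "(\<Sum>i\<in>I. \<integral>\<^sup>+y. ennreal ((x - y)^2) * ennreal (f (x,y)) * indicator (C i) y \<partial>P) = (\<integral>\<^sup>+y. ennreal ((x - y)^2) * ennreal (f (x,y)) \<partial>P)" .
  qed
  finally show ?thesis .
qed

end



definition qz :: "nat \<Rightarrow> real \<Rightarrow> int" where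
  "qz n y = (if \<bar>y\<bar> < real n then \<lfloor>real n * y\<rfloor> else int (n * n))"
definition rz :: "nat \<Rightarrow> int \<Rightarrow> real" where
  "rz n i = (if i = int (n * n) then 0 else real_of_int i / real n)"

lemma qz_meas[measurable]: "qz n \<in> borel \<rightarrow>\<^sub>M count_space UNIV"
  unfolding qz_def by measurable

lemma qz_cell_meas: "{y. qz n y = i} \<in> sets borel"
proof -
  have "{y \<in> space borel. qz n y = i} \<in> sets borel" by measurable
  then show ?thesis by simp
qed

lemma qz_range: "qz n y \<in> {- int (n * n) .. int (n * n)}"
proof (cases "\<bar>y\<bar> < real n")
  case True
  have yb: "- real n < y" "y < real n" using True by auto
  have np: "0 < real n" using True by auto
  have a: "- (real n * real n) < real n * y" using mult_strict_left_mono[OF yb(1) np] by simp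
  have b: "real n * y < real n * real n" using mult_strict_left_mono[OF yb(2) np] by simp
  have "- int (n * n) \<le> \<lfloor>real n * y\<rfloor>" using a by (simp add: le_floor_iff)
  moreover have "\<lfloor>real n * y\<rfloor> \<le> int (n * n)" using b by (simp add: floor_le_iff)
  ultimately show ?thesis using True by (simp add: qz_def)
next
  case False then show ?thesis by (simp add: qz_def)
qed

lemma rz_bound:
  assumes n: "1 \<le> n"
  shows "(y - rz n (qz n y))^2 \<le> (if \<bar>y\<bar> < real n then 1 / (real n)^2 else y^2)"
proof (cases "\<bar>y\<bar> < real n")
  case True
  define k where "k = \<lfloor>real n * y\<rfloor>"
  have yb: "y < real n" using True by auto
  have np: "0 < real n" using True by auto
  have b: "real n * y < real n * real n" using mult_strict_left_mono[OF yb np] by simp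
  have k1: "real_of_int k \<le> real n * y" unfolding k_def by simp
  have kne: "k \<noteq> int (n * n)"
  proof
    assume "k = int (n * n)"
    then have "real_of_int (int (n*n)) \<le> real n * y" using k1 by simp
    then show False using b by simp
  qed
  have q: "qz n y = k" using True by (simp add: qz_def k_def)
  have r: "rz n k = real_of_int k / real n" using kne by (simp add: rz_def)
  have npos: "0 < real n" using n by simp
  have k2: "real n * y < real_of_int k + 1" unfolding k_def by linarith
  have d1: "0 \<le> y - real_of_int k / real n" using k1 npos by (simp add: field_simps)
  have d2: "y - real_of_int k / real n \<le> 1 / real n"
  proof -
    have e: "y - real_of_int k / real n = (real n * y - real_of_int k) / real n" using npos by (simp add: field_simps)
    have "real n * y - real_of_int k \<le> 1" using k2 by linarith
    then have "(real n * y - real_of_int k) / real n \<le> 1 / real n" using npos by (rule divide_right_mono[OF _ less_imp_le])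
    then show ?thesis using e by simp
  qed
  have "(y - real_of_int k / real n)^2 \<le> (1 / real n)^2" using d1 d2 by (intro power_mono) auto
  then show ?thesis using True q r by (simp add: power_divide)
next
  case False
  then show ?thesis by (simp add: qz_def rz_def)
qed

lemma sq_rep: "(y - y')^2 \<le> 2 * (y - r)^2 + 2 * (y' - r)^2" for y y' r :: real
proof -
  have "0 \<le> (y + y' - 2 * r)^2" by simp
  then show ?thesis by (simp add: power2_eq_square algebra_simps)
qed

lemma tail_small:
  fixes P :: "real measure"
  assumes sP: "sets P = sets borel" and int2: "integrable P (\<lambda>y. y^2)" and e: "0 < e"
  shows "\<exists>N. \<forall>n\<ge>N. (\<integral>y. y^2 * indicator {y. real n \<le> \<bar>y\<bar>} y \<partial>P) < e"
proof -
  have sP'[measurable_cong]: "sets P = sets borel" by (rule sP)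
  have "(\<lambda>n. \<integral>y. y^2 * indicator {y. real n \<le> \<bar>y\<bar>} y \<partial>P) \<longlonglongrightarrow> (\<integral>y. (0::real) \<partial>P)"
  proof (rule integral_dominated_convergence[where w="\<lambda>y. y^2"])
    show "(\<lambda>y. 0::real) \<in> borel_measurable P" by simp
    show "(\<lambda>y. y^2 * indicator {y. real n \<le> \<bar>y\<bar>} y) \<in> borel_measurable P" for n by measurable
    show "integrable P (\<lambda>y. y^2)" by (rule int2)
    show "AE y in P. (\<lambda>n. y^2 * indicator {y. real n \<le> \<bar>y\<bar>} y) \<longlonglongrightarrow> 0"
    proof (rule AE_I2, rule tendsto_eventually)
      fix y :: real
      obtain N :: nat where "\<bar>y\<bar> < real N" using reals_Archimedean2 by blast
      then show "eventually (\<lambda>n. y^2 * indicator {y. real n \<le> \<bar>y\<bar>} y = 0) sequentially"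
        unfolding eventually_sequentially
        by (intro exI[of _ N]) (auto simp: indicator_def)
    qed
    show "AE y in P. norm (y^2 * indicator {y. real n \<le> \<bar>y\<bar>} y) \<le> y^2" for n
      by (rule AE_I2) (auto simp: indicator_def)
  qed
  then have "(\<lambda>n. \<integral>y. y^2 * indicator {y. real n \<le> \<bar>y\<bar>} y \<partial>P) \<longlonglongrightarrow> 0" by simp
  then have "eventually (\<lambda>n. (\<integral>y. y^2 * indicator {y. real n \<le> \<bar>y\<bar>} y \<partial>P) < e) sequentially"
    using e by (rule order_tendstoD)
  then show ?thesis unfolding eventually_sequentially .
qed


lemma sum_qz: "finite I \<Longrightarrow> qz n y \<in> I \<Longrightarrow> (\<Sum>i\<in>I. g i * indicator {y. qz n y = i} y) = (g (qz n y) :: ennreal)"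
  by (subst sum.remove[of I "qz n y"]) (auto intro!: sum.neutral simp: indicator_def)

lemma quantizer:
  fixes P :: "real measure"
  assumes P: "prob_space P" and sP: "sets P = sets borel" and int2: "integrable P (\<lambda>y. y^2)" and d: "0 < \<delta>"
  shows "\<exists>n::nat. 1 \<le> n \<and>
    (\<Sum>i\<in>{i\<in>{- int (n * n) .. int (n * n)}. 0 < measure P {y. qz n y = i}}.
        ennreal (1 / measure P {y. qz n y = i}) *
        (\<integral>\<^sup>+y. \<integral>\<^sup>+y'. ennreal ((y - y')^2) * indicator {y. qz n y = i} y * indicator {y. qz n y = i} y' \<partial>P \<partial>P))
      \<le> ennreal \<delta>"
proof -
  have sP'[measurable_cong]: "sets P = sets borel" by (rule sP)
  have d8: "0 < \<delta> / 8" using d by simp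
  obtain N1 where N1: "\<And>n. n \<ge> N1 \<Longrightarrow> (\<integral>y. y^2 * indicator {y. real n \<le> \<bar>y\<bar>} y \<partial>P) < \<delta> / 8"
    using tail_small[OF sP int2 d8] by blast
  obtain N2 :: nat where N2: "8 / \<delta> < real N2" using reals_Archimedean2 by blast
  define n where "n = max (max N1 N2) 1"
  have n1: "1 \<le> n" unfolding n_def by simp
  have npos: "0 < real n" using n1 by simp
  have tail: "(\<integral>y. y^2 * indicator {y. real n \<le> \<bar>y\<bar>} y \<partial>P) < \<delta> / 8" by (rule N1) (simp add: n_def)
  have inv: "1 / (real n)^2 \<le> \<delta> / 8"
  proof -
    have "8 / \<delta> < real n" using N2 unfolding n_def by (smt (verit, best) max.cobounded2 of_nat_le_iff max.cobounded1 order_trans)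
    then have "1 / real n < \<delta> / 8" using d npos by (simp add: field_simps)
    moreover have "1 / (real n)^2 \<le> 1 / real n" using n1 npos by (simp add: power2_eq_square field_simps)
    ultimately show ?thesis by simp
  qed
  define I where "I = {- int (n * n) .. int (n * n)}"
  define C where "C i = {y. qz n y = i}" for i
  define p where "p i = measure P (C i)" for i
  define E where "E i = (\<integral>\<^sup>+y. ennreal ((y - rz n i)^2) * indicator (C i) y \<partial>P)" for i
  have Cm[measurable]: "C i \<in> sets borel" for i unfolding C_def by (rule qz_cell_meas)
  have pC: "emeasure P (C i) = ennreal (p i)" for i
    unfolding p_def using sP by (simp add: finite_measure.emeasure_eq_measure[OF prob_space.finite_measure[OF P]])
  have finI: "finite I" unfolding I_def by simp
  have cell: "ennreal (1 / p i) * (\<integral>\<^sup>+y. \<integral>\<^sup>+y'. ennreal ((y - y')^2) * indicator (C i) y * indicator (C i) y' \<partial>P \<partial>P) \<le> 4 * E i"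
    if pp: "0 < p i" for i
  proof -
    define r where "r = rz n i"
    have "(\<integral>\<^sup>+y. \<integral>\<^sup>+y'. ennreal ((y - y')^2) * indicator (C i) y * indicator (C i) y' \<partial>P \<partial>P)
        \<le> (\<integral>\<^sup>+y. \<integral>\<^sup>+y'. ennreal (2 * (y - r)^2) * indicator (C i) y * indicator (C i) y' + indicator (C i) y * (ennreal (2 * (y' - r)^2) * indicator (C i) y') \<partial>P \<partial>P)"
    proof (intro nn_integral_mono)
      fix y y'
      have "ennreal ((y - y')^2) \<le> ennreal (2 * (y - r)^2) + ennreal (2 * (y' - r)^2)"
        by (simp add: ennreal_plus[symmetric] del: ennreal_plus) (intro ennreal_leI sq_rep)
      then have "ennreal ((y - y')^2) * (indicator (C i) y * indicator (C i) y') \<le> (ennreal (2 * (y - r)^2) + ennreal (2 * (y' - r)^2)) * (indicator (C i) y * indicator (C i) y')"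
        by (rule mult_right_mono) simp
      then show "ennreal ((y - y')^2) * indicator (C i) y * indicator (C i) y' \<le> ennreal (2 * (y - r)^2) * indicator (C i) y * indicator (C i) y' + indicator (C i) y * (ennreal (2 * (y' - r)^2) * indicator (C i) y')"
        by (simp add: algebra_simps)
    qed
    also have "\<dots> = (\<integral>\<^sup>+y. ennreal (2 * (y - r)^2) * indicator (C i) y * ennreal (p i) + indicator (C i) y * (2 * E i) \<partial>P)"
    proof (rule nn_integral_cong)
      fix y
      have "(\<integral>\<^sup>+y'. ennreal (2 * (y - r)^2) * indicator (C i) y * indicator (C i) y' + indicator (C i) y * (ennreal (2 * (y' - r)^2) * indicator (C i) y') \<partial>P)
          = (\<integral>\<^sup>+y'. ennreal (2 * (y - r)^2) * indicator (C i) y * indicator (C i) y' \<partial>P) + (\<integral>\<^sup>+y'. indicator (C i) y * (ennreal (2 * (y' - r)^2) * indicator (C i) y') \<partial>P)"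
        by (rule nn_integral_add) measurable
      also have "(\<integral>\<^sup>+y'. ennreal (2 * (y - r)^2) * indicator (C i) y * indicator (C i) y' \<partial>P) = ennreal (2 * (y - r)^2) * indicator (C i) y * ennreal (p i)"
        by (subst nn_integral_cmult) (use pC sP in auto)
      also have "(\<integral>\<^sup>+y'. indicator (C i) y * (ennreal (2 * (y' - r)^2) * indicator (C i) y') \<partial>P) = indicator (C i) y * (2 * E i)"
      proof -
        have "(\<integral>\<^sup>+y'. indicator (C i) y * (ennreal (2 * (y' - r)^2) * indicator (C i) y') \<partial>P) = indicator (C i) y * (\<integral>\<^sup>+y'. ennreal (2 * (y' - r)^2) * indicator (C i) y' \<partial>P)"
          by (rule nn_integral_cmult) measurable
        also have "(\<integral>\<^sup>+y'. ennreal (2 * (y' - r)^2) * indicator (C i) y' \<partial>P) = (\<integral>\<^sup>+y'. 2 * (ennreal ((y' - r)^2) * indicator (C i) y') \<partial>P)"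
          by (intro nn_integral_cong) (simp add: ennreal_mult mult.assoc)
        also have "\<dots> = 2 * E i" unfolding E_def r_def by (rule nn_integral_cmult) measurable
        finally show ?thesis .
      qed
      finally show "(\<integral>\<^sup>+y'. ennreal (2 * (y - r)^2) * indicator (C i) y * indicator (C i) y' + indicator (C i) y * (ennreal (2 * (y' - r)^2) * indicator (C i) y') \<partial>P)
          = ennreal (2 * (y - r)^2) * indicator (C i) y * ennreal (p i) + indicator (C i) y * (2 * E i)" .
    qed
    also have "\<dots> = 2 * E i * ennreal (p i) + ennreal (p i) * (2 * E i)"
    proof -
      have "(\<integral>\<^sup>+y. ennreal (2 * (y - r)^2) * indicator (C i) y * ennreal (p i) + indicator (C i) y * (2 * E i) \<partial>P)
          = (\<integral>\<^sup>+y. ennreal (2 * (y - r)^2) * indicator (C i) y * ennreal (p i) \<partial>P) + (\<integral>\<^sup>+y. indicator (C i) y * (2 * E i) \<partial>P)"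
        by (rule nn_integral_add) measurable
      also have "(\<integral>\<^sup>+y. ennreal (2 * (y - r)^2) * indicator (C i) y * ennreal (p i) \<partial>P) = (\<integral>\<^sup>+y. 2 * (ennreal ((y - r)^2) * indicator (C i) y) \<partial>P) * ennreal (p i)"
        by (subst nn_integral_multc[symmetric]) (measurable, auto intro!: nn_integral_cong simp: ennreal_mult mult.assoc)
      also have "(\<integral>\<^sup>+y. 2 * (ennreal ((y - r)^2) * indicator (C i) y) \<partial>P) = 2 * E i"
        unfolding E_def r_def by (rule nn_integral_cmult) measurable
      also have "(\<integral>\<^sup>+y. indicator (C i) y * (2 * E i) \<partial>P) = ennreal (p i) * (2 * E i)"
        by (subst nn_integral_multc) (use pC sP in auto)
      finally show ?thesis .
    qed
    also have "2 * E i * ennreal (p i) + ennreal (p i) * (2 * E i) = 4 * E i * ennreal (p i)"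
    proof -
      have "(2 + 2) * (E i * ennreal (p i)) = 2 * (E i * ennreal (p i)) + 2 * (E i * ennreal (p i))" by (rule distrib_right)
      then show ?thesis by (simp add: mult_ac)
    qed
    finally have V: "(\<integral>\<^sup>+y. \<integral>\<^sup>+y'. ennreal ((y - y')^2) * indicator (C i) y * indicator (C i) y' \<partial>P \<partial>P) \<le> 4 * E i * ennreal (p i)" .
    have "ennreal (1 / p i) * (\<integral>\<^sup>+y. \<integral>\<^sup>+y'. ennreal ((y - y')^2) * indicator (C i) y * indicator (C i) y' \<partial>P \<partial>P) \<le> ennreal (1 / p i) * (4 * E i * ennreal (p i))"
      by (rule mult_left_mono[OF V]) simp
    also have "\<dots> = 4 * E i * (ennreal (1 / p i) * ennreal (p i))" by (simp add: mult_ac)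
    also have "ennreal (1 / p i) * ennreal (p i) = 1" using pp by (simp add: ennreal_mult[symmetric])
    finally show ?thesis by simp
  qed
  have "(\<Sum>i\<in>{i\<in>I. 0 < p i}. ennreal (1 / p i) * (\<integral>\<^sup>+y. \<integral>\<^sup>+y'. ennreal ((y - y')^2) * indicator (C i) y * indicator (C i) y' \<partial>P \<partial>P))
      \<le> (\<Sum>i\<in>{i\<in>I. 0 < p i}. 4 * E i)"
    by (rule sum_mono) (rule cell, simp)
  also have "\<dots> \<le> (\<Sum>i\<in>I. 4 * E i)"
  proof -
    have sub: "{i\<in>I. 0 < p i} \<subseteq> I" by blast
    show ?thesis by (rule sum_mono2[OF finI sub]) simp
  qed
  also have "\<dots> = 4 * (\<integral>\<^sup>+y. (\<Sum>i\<in>I. ennreal ((y - rz n i)^2) * indicator (C i) y) \<partial>P)"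
    unfolding E_def by (subst nn_integral_sum) (measurable, simp add: sum_distrib_left)
  finally have S1: "(\<Sum>i\<in>{i\<in>I. 0 < p i}. ennreal (1 / p i) * (\<integral>\<^sup>+y. \<integral>\<^sup>+y'. ennreal ((y - y')^2) * indicator (C i) y * indicator (C i) y' \<partial>P \<partial>P))
      \<le> 4 * (\<integral>\<^sup>+y. (\<Sum>i\<in>I. ennreal ((y - rz n i)^2) * indicator (C i) y) \<partial>P)" .
  have "(\<integral>\<^sup>+y. (\<Sum>i\<in>I. ennreal ((y - rz n i)^2) * indicator (C i) y) \<partial>P) = (\<integral>\<^sup>+y. ennreal ((y - rz n (qz n y))^2) \<partial>P)"
    unfolding C_def by (intro nn_integral_cong sum_qz finI) (unfold I_def, rule qz_range)
  also have "\<dots> \<le> (\<integral>\<^sup>+y. ennreal (1 / (real n)^2) + ennreal (y^2 * indicator {y. real n \<le> \<bar>y\<bar>} y) \<partial>P)"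
  proof (intro nn_integral_mono)
    fix y
    have "(y - rz n (qz n y))^2 \<le> 1 / (real n)^2 + y^2 * indicator {y. real n \<le> \<bar>y\<bar>} y"
    proof -
      show ?thesis
      proof (cases "\<bar>y\<bar> < real n")
        case True then show ?thesis using rz_bound[OF n1, of y] by (simp add: indicator_def)
      next
        case False
        have a: "(y - rz n (qz n y))^2 \<le> y^2" using rz_bound[OF n1, of y] False by simp
        have b: "0 \<le> 1 / (real n)^2" by simp
        have c: "indicator {y. real n \<le> \<bar>y\<bar>} y = (1::real)" using False by (simp add: indicator_def)
        show ?thesis unfolding c using a b by linarith
      qed
    qed
    then show "ennreal ((y - rz n (qz n y))^2) \<le> ennreal (1 / (real n)^2) + ennreal (y^2 * indicator {y. real n \<le> \<bar>y\<bar>} y)"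
      by (simp add: ennreal_plus[symmetric] del: ennreal_plus)
  qed
  also have "\<dots> = ennreal (1 / (real n)^2) + ennreal (\<integral>y. y^2 * indicator {y. real n \<le> \<bar>y\<bar>} y \<partial>P)"
  proof -
    have i: "integrable P (\<lambda>y. y^2 * indicator {y. real n \<le> \<bar>y\<bar>} y)"
      by (rule Bochner_Integration.integrable_bound[OF int2]) (auto simp: indicator_def)
    have "(\<integral>\<^sup>+y. ennreal (1 / (real n)^2) + ennreal (y^2 * indicator {y. real n \<le> \<bar>y\<bar>} y) \<partial>P)
        = (\<integral>\<^sup>+y. ennreal (1 / (real n)^2) \<partial>P) + (\<integral>\<^sup>+y. ennreal (y^2 * indicator {y. real n \<le> \<bar>y\<bar>} y) \<partial>P)"
      by (rule nn_integral_add) measurable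
    also have "(\<integral>\<^sup>+y. ennreal (1 / (real n)^2) \<partial>P) = ennreal (1 / (real n)^2)"
      using P by (simp add: prob_space.emeasure_space_1)
    also have "(\<integral>\<^sup>+y. ennreal (y^2 * indicator {y. real n \<le> \<bar>y\<bar>} y) \<partial>P) = ennreal (\<integral>y. y^2 * indicator {y. real n \<le> \<bar>y\<bar>} y \<partial>P)"
      by (rule nn_integral_eq_integral[OF i]) (simp add: indicator_def)
    finally show ?thesis .
  qed
  finally have X: "(\<integral>\<^sup>+y. (\<Sum>i\<in>I. ennreal ((y - rz n i)^2) * indicator (C i) y) \<partial>P) \<le> ennreal (1 / (real n)^2) + ennreal (\<integral>y. y^2 * indicator {y. real n \<le> \<bar>y\<bar>} y \<partial>P)" .
  have fin: "(\<Sum>i\<in>{i\<in>I. 0 < p i}. ennreal (1 / p i) * (\<integral>\<^sup>+y. \<integral>\<^sup>+y'. ennreal ((y - y')^2) * indicator (C i) y * indicator (C i) y' \<partial>P \<partial>P))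
      \<le> 4 * (ennreal (1 / (real n)^2) + ennreal (\<integral>y. y^2 * indicator {y. real n \<le> \<bar>y\<bar>} y \<partial>P))"
    using S1 mult_left_mono[OF X, of 4] by simp
  have tnn: "0 \<le> (\<integral>y. y^2 * indicator {y. real n \<le> \<bar>y\<bar>} y \<partial>P)"
    by (rule integral_nonneg_AE) (simp add: indicator_def)
  have "4 * (ennreal (1 / (real n)^2) + ennreal (\<integral>y. y^2 * indicator {y. real n \<le> \<bar>y\<bar>} y \<partial>P))
      = ennreal (4 * (1 / (real n)^2 + (\<integral>y. y^2 * indicator {y. real n \<le> \<bar>y\<bar>} y \<partial>P)))"
  proof -
    have s: "ennreal (1 / (real n)^2) + ennreal (\<integral>y. y^2 * indicator {y. real n \<le> \<bar>y\<bar>} y \<partial>P) = ennreal (1 / (real n)^2 + (\<integral>y. y^2 * indicator {y. real n \<le> \<bar>y\<bar>} y \<partial>P))"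
      using tnn by (simp add: ennreal_plus)
    have m: "ennreal (4 * (1 / (real n)^2 + (\<integral>y. y^2 * indicator {y. real n \<le> \<bar>y\<bar>} y \<partial>P))) = ennreal 4 * ennreal (1 / (real n)^2 + (\<integral>y. y^2 * indicator {y. real n \<le> \<bar>y\<bar>} y \<partial>P))"
      using tnn by (intro ennreal_mult) auto
    show ?thesis unfolding s m by simp
  qed
  also have "\<dots> \<le> ennreal \<delta>"
    using inv tail by (intro ennreal_leI) simp
  finally show ?thesis using fin n1 unfolding I_def C_def p_def by (intro exI[of _ n]) auto
qed




lemma marg_fst:
  fixes P :: "real measure" and f :: "real \<times> real \<Rightarrow> real"
  assumes P: "prob_space P" and sP: "sets P = sets borel"
    and fm: "f \<in> borel_measurable (borel \<Otimes>\<^sub>M borel)" and fnn: "\<And>z. 0 \<le> f z"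
    and d: "distr (density (P \<Otimes>\<^sub>M P) (\<lambda>z. ennreal (f z))) borel fst = P"
  shows "AE x in P. (\<integral>\<^sup>+y. ennreal (f (x,y)) \<partial>P) = 1"
proof -
  have sP'[measurable_cong]: "sets P = sets borel" by (rule sP)
  have fm'[measurable]: "f \<in> borel_measurable (borel \<Otimes>\<^sub>M borel)" by (rule fm)
  have sPP[measurable_cong]: "sets (P \<Otimes>\<^sub>M P) = sets (borel \<Otimes>\<^sub>M borel)" by (intro sets_pair_measure_cong sP)
  have Psf: "sigma_finite_measure P" using P by (simp add: prob_space_imp_sigma_finite)
  define g where "g x = (\<integral>\<^sup>+y. ennreal (f (x,y)) \<partial>P)" for x
  have gm[measurable]: "g \<in> borel_measurable borel"
    unfolding g_def by (rule sigma_finite_measure.borel_measurable_nn_integral[OF Psf]) measurable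
  have "density P g = density P (\<lambda>_. 1)"
  proof (rule measure_eqI)
    show "sets (density P g) = sets (density P (\<lambda>_. 1))" by simp
    fix A assume "A \<in> sets (density P g)"
    then have A[measurable]: "A \<in> sets borel" using sP by simp
    have "emeasure (density P g) A = (\<integral>\<^sup>+x. g x * indicator A x \<partial>P)"
      by (subst emeasure_density) (use sP in auto)
    also have "\<dots> = (\<integral>\<^sup>+x. \<integral>\<^sup>+y. ennreal (f (x,y)) * indicator (A \<times> UNIV) (x,y) \<partial>P \<partial>P)"
      unfolding g_def by (intro nn_integral_cong) (subst nn_integral_multc[symmetric], measurable, simp add: indicator_def)
    also have "\<dots> = (\<integral>\<^sup>+z. ennreal (f z) * indicator (A \<times> UNIV) z \<partial>(P \<Otimes>\<^sub>M P))"
      by (rule sigma_finite_measure.nn_integral_fst[OF Psf]) measurable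
    also have "\<dots> = emeasure (density (P \<Otimes>\<^sub>M P) (\<lambda>z. ennreal (f z))) (A \<times> UNIV)"
    proof -
      have gm2: "(\<lambda>z. ennreal (f z)) \<in> borel_measurable (P \<Otimes>\<^sub>M P)" by measurable
      have Sm: "A \<times> UNIV \<in> sets (P \<Otimes>\<^sub>M P)" using A by (simp add: sPP)
      show ?thesis by (simp add: emeasure_density[OF gm2 Sm] mult.commute)
    qed
    also have "\<dots> = emeasure (distr (density (P \<Otimes>\<^sub>M P) (\<lambda>z. ennreal (f z))) borel fst) A"
    proof -
      have sp: "space (density (P \<Otimes>\<^sub>M P) (\<lambda>z. ennreal (f z))) = UNIV"
        using sets_eq_imp_space_eq[OF sPP] by (simp add: space_pair_measure)
      have "fst -` A \<inter> space (density (P \<Otimes>\<^sub>M P) (\<lambda>z. ennreal (f z))) = A \<times> UNIV" using sp by auto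
      moreover have "fst \<in> density (P \<Otimes>\<^sub>M P) (\<lambda>z. ennreal (f z)) \<rightarrow>\<^sub>M borel" by measurable
      ultimately show ?thesis by (simp add: emeasure_distr[OF _ A])
    qed
    also have "\<dots> = emeasure P A" using d by simp
    also have "\<dots> = emeasure (density P (\<lambda>_. 1)) A" by (simp add: density_1)
    finally show "emeasure (density P g) A = emeasure (density P (\<lambda>_. 1)) A" .
  qed
  then have "AE x in P. g x = 1"
    by (intro sigma_finite_measure.density_unique[OF Psf]) auto
  then show ?thesis unfolding g_def .
qed


lemma marg_snd:
  fixes P :: "real measure" and f :: "real \<times> real \<Rightarrow> real"
  assumes P: "prob_space P" and sP: "sets P = sets borel"
    and fm: "f \<in> borel_measurable (borel \<Otimes>\<^sub>M borel)" and fnn: "\<And>z. 0 \<le> f z"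
    and d: "distr (density (P \<Otimes>\<^sub>M P) (\<lambda>z. ennreal (f z))) borel snd = P"
  shows "AE y in P. (\<integral>\<^sup>+x. ennreal (f (x,y)) \<partial>P) = 1"
proof -
  have sP'[measurable_cong]: "sets P = sets borel" by (rule sP)
  have fm'[measurable]: "f \<in> borel_measurable (borel \<Otimes>\<^sub>M borel)" by (rule fm)
  have sPP[measurable_cong]: "sets (P \<Otimes>\<^sub>M P) = sets (borel \<Otimes>\<^sub>M borel)" by (intro sets_pair_measure_cong sP)
  have Psf: "sigma_finite_measure P" using P by (simp add: prob_space_imp_sigma_finite)
  interpret pair_sigma_finite P P by (intro pair_sigma_finite.intro Psf)
  define g where "g y = (\<integral>\<^sup>+x. ennreal (f (x,y)) \<partial>P)" for y
  have gm[measurable]: "g \<in> borel_measurable borel"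
  proof -
    have "(\<lambda>y. \<integral>\<^sup>+x. ennreal (f (x,y)) \<partial>P) \<in> borel_measurable P"
      by (rule M1.borel_measurable_nn_integral) (simp add: split_beta', measurable)
    then show ?thesis unfolding g_def by (simp add: measurable_cong_sets[OF sP refl])
  qed
  have "density P g = density P (\<lambda>_. 1)"
  proof (rule measure_eqI)
    show "sets (density P g) = sets (density P (\<lambda>_. 1))" by simp
    fix A assume "A \<in> sets (density P g)"
    then have A[measurable]: "A \<in> sets borel" using sP by simp
    have "emeasure (density P g) A = (\<integral>\<^sup>+y. g y * indicator A y \<partial>P)"
      by (subst emeasure_density) (use sP in auto)
    also have "\<dots> = (\<integral>\<^sup>+y. \<integral>\<^sup>+x. ennreal (f (x,y)) * indicator (UNIV \<times> A) (x,y) \<partial>P \<partial>P)"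
      unfolding g_def by (intro nn_integral_cong) (subst nn_integral_multc[symmetric], measurable, simp add: indicator_def)
    also have "\<dots> = (\<integral>\<^sup>+z. ennreal (f z) * indicator (UNIV \<times> A) z \<partial>(P \<Otimes>\<^sub>M P))"
      by (rule nn_integral_snd) measurable
    also have "\<dots> = emeasure (density (P \<Otimes>\<^sub>M P) (\<lambda>z. ennreal (f z))) (UNIV \<times> A)"
    proof -
      have gm2: "(\<lambda>z. ennreal (f z)) \<in> borel_measurable (P \<Otimes>\<^sub>M P)" by measurable
      have Sm: "UNIV \<times> A \<in> sets (P \<Otimes>\<^sub>M P)" using A by (simp add: sPP)
      show ?thesis by (simp add: emeasure_density[OF gm2 Sm] mult.commute)
    qed
    also have "\<dots> = emeasure (distr (density (P \<Otimes>\<^sub>M P) (\<lambda>z. ennreal (f z))) borel snd) A"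
    proof -
      have sp: "space (density (P \<Otimes>\<^sub>M P) (\<lambda>z. ennreal (f z))) = UNIV"
        using sets_eq_imp_space_eq[OF sPP] by (simp add: space_pair_measure)
      have "snd -` A \<inter> space (density (P \<Otimes>\<^sub>M P) (\<lambda>z. ennreal (f z))) = UNIV \<times> A" using sp by auto
      moreover have "snd \<in> density (P \<Otimes>\<^sub>M P) (\<lambda>z. ennreal (f z)) \<rightarrow>\<^sub>M borel" by measurable
      ultimately show ?thesis by (simp add: emeasure_distr[OF _ A])
    qed
    also have "\<dots> = emeasure P A" using d by simp
    also have "\<dots> = emeasure (density P (\<lambda>_. 1)) A" by (simp add: density_1)
    finally show "emeasure (density P g) A = emeasure (density P (\<lambda>_. 1)) A" .
  qed
  then have "AE y in P. g y = 1"
    by (intro sigma_finite_measure.density_unique[OF Psf]) auto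
  then show ?thesis unfolding g_def .
qed

lemma J_density:
  fixes P :: "real measure" and J :: "(real \<times> real) measure"
  assumes P: "prob_space P" and sP: "sets P = sets borel" and J: "prob_space J"
    and sJ: "sets J = sets (borel \<Otimes>\<^sub>M borel)"
    and d1: "distr J borel fst = P" and d2: "distr J borel snd = P"
    and fin: "mi_joint J \<noteq> \<infinity>"
  shows "\<exists>f. f \<in> borel_measurable (borel \<Otimes>\<^sub>M borel) \<and> (\<forall>z. 0 \<le> f z) \<and>
     J = density (P \<Otimes>\<^sub>M P) (\<lambda>z. ennreal (f z)) \<and> integrable (P \<Otimes>\<^sub>M P) (\<lambda>z. f z * ln (f z)) \<and>
     mi_joint J = ereal (\<integral>z. f z * ln (f z) \<partial>(P \<Otimes>\<^sub>M P))"
proof -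
  define Q where "Q = P \<Otimes>\<^sub>M P"
  have sP'[measurable_cong]: "sets P = sets borel" by (rule sP)
  have sQ[measurable_cong]: "sets Q = sets (borel \<Otimes>\<^sub>M borel)" unfolding Q_def by (intro sets_pair_measure_cong sP)
  have Psf: "sigma_finite_measure P" using P by (simp add: prob_space_imp_sigma_finite)
  have Qsf: "sigma_finite_measure Q" unfolding Q_def by (rule sigma_finite_pair_measure[OF Psf Psf])
  have Jsf: "sigma_finite_measure J" using J by (simp add: prob_space_imp_sigma_finite)
  have mi: "mi_joint J = kl_div_ext Q J" unfolding mi_joint_def d1 d2 Q_def ..
  have conds: "absolutely_continuous Q J \<and> sets J = sets Q \<and> integrable J (entropy_density (exp 1) Q J)"
    and val: "mi_joint J = ereal (KL_divergence (exp 1) Q J)"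
    using fin unfolding mi kl_div_ext_def by (auto split: if_splits)
  then have ac: "absolutely_continuous Q J" and sJQ: "sets J = sets Q"
    and ient: "integrable J (entropy_density (exp 1) Q J)" by auto
  define f where "f z = enn2real (RN_deriv Q J z)" for z
  have fmQ: "f \<in> borel_measurable Q" unfolding f_def by measurable
  then have fm: "f \<in> borel_measurable (borel \<Otimes>\<^sub>M borel)" by (simp add: measurable_cong_sets[OF sQ refl])
  have fnn: "\<forall>z. 0 \<le> f z" unfolding f_def by simp
  have Jd: "J = density Q (\<lambda>z. ennreal (f z))"
  proof -
    have "density Q (RN_deriv Q J) = J" by (rule sigma_finite_measure.density_RN_deriv[OF Qsf ac sJQ])
    moreover have "density Q (RN_deriv Q J) = density Q (\<lambda>z. ennreal (f z))"
    proof (rule density_cong)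
      show "AE z in Q. RN_deriv Q J z = ennreal (f z)"
        using sigma_finite_measure.RN_deriv_finite[OF Qsf Jsf ac sJQ]
        by eventually_elim (auto simp: f_def less_top)
    qed (use fmQ in auto)
    ultimately show ?thesis by simp
  qed
  have ed: "entropy_density (exp 1) Q J = (\<lambda>z. ln (f z))"
    unfolding entropy_density_def f_def by (auto simp: log_e)
  have int: "integrable Q (\<lambda>z. f z * ln (f z))"
  proof -
    have "integrable (density Q (\<lambda>z. ennreal (f z))) (\<lambda>z. ln (f z))" using ient unfolding ed using Jd by simp
    then show ?thesis using fmQ fnn by (subst (asm) integrable_real_density) auto
  qed
  have KL: "KL_divergence (exp 1) Q J = (\<integral>z. f z * ln (f z) \<partial>Q)"
    unfolding Jd by (subst sigma_finite_measure.KL_density[OF Qsf]) (use fmQ fnn in \<open>auto simp: log_e\<close>)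
  show ?thesis
    apply (rule exI[of _ f])
    apply (intro conjI)
    using fm apply (simp)
    using fnn apply (simp)
    using Jd apply (simp add: Q_def)
    using int apply (simp add: Q_def)
    using val KL by (simp add: Q_def)
qed




definition e0 :: "int \<Rightarrow> real" where "e0 i = 2 * real_of_int i"
definition e1 :: "int \<Rightarrow> real" where "e1 j = 2 * real_of_int j + 1"

lemma e0_inj: "inj e0" unfolding e0_def by (auto intro: injI)
lemma e1_inj: "inj e1" unfolding e1_def by (auto intro: injI)
lemma e01: "e0 i \<noteq> e1 j"
proof
  assume "e0 i = e1 j"
  then have "real_of_int (2 * i) = real_of_int (2 * j + 1)" unfolding e0_def e1_def by simp
  then have "2 * i = 2 * j + 1" by (simp only: of_int_eq_iff)
  then show False by presburger
qed

lemma sum_T: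
  assumes "finite A" "finite B"
  shows "(\<Sum>t\<in>e0 ` A \<union> e1 ` B. g t) = (\<Sum>i\<in>A. g (e0 i)) + (\<Sum>j\<in>B. g (e1 j))"
proof -
  have "(\<Sum>t\<in>e0 ` A \<union> e1 ` B. g t) = (\<Sum>t\<in>e0 ` A. g t) + (\<Sum>t\<in>e1 ` B. g t)"
    by (rule sum.union_disjoint) (use assms e01 in auto)
  also have "(\<Sum>t\<in>e0 ` A. g t) = (\<Sum>i\<in>A. g (e0 i))"
    by (rule sum.reindex[unfolded comp_def]) (use e0_inj in \<open>auto intro: inj_on_subset\<close>)
  also have "(\<Sum>t\<in>e1 ` B. g t) = (\<Sum>j\<in>B. g (e1 j))"
    by (rule sum.reindex[unfolded comp_def]) (use e1_inj in \<open>auto intro: inj_on_subset\<close>)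
  finally show ?thesis .
qed

lemma pos_partition_AE:
  fixes P :: "real measure" and I :: "int set"
  assumes P: "prob_space P" and sP: "sets P = sets borel" and finI: "finite I"
    and Cm: "\<And>j. C j \<in> sets borel"
    and Cdisj: "\<And>i j. i \<in> I \<Longrightarrow> j \<in> I \<Longrightarrow> i \<noteq> j \<Longrightarrow> C i \<inter> C j = {}"
    and Ccov: "\<And>y. \<exists>j\<in>I. y \<in> C j"
  shows "AE x in P. (\<Sum>j\<in>{j\<in>I. 0 < measure P (C j)}. indicator (C j) x :: real) = 1"
proof -
  have null: "AE x in P. x \<notin> C j" if "j \<in> I - {j\<in>I. 0 < measure P (C j)}" for j
  proof -
    have "measure P (C j) = 0" using that measure_nonneg[of P "C j"] by auto
    moreover have Cj: "C j \<in> sets P" using sP Cm by simp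
    ultimately have "emeasure P (C j) = 0"
      using finite_measure.emeasure_eq_measure[OF prob_space.finite_measure[OF P]] by simp
    then have "C j \<in> null_sets P" using Cj by (simp add: null_sets_def)
    then show ?thesis by (rule AE_not_in)
  qed
  have "AE x in P. \<forall>j\<in>I - {j\<in>I. 0 < measure P (C j)}. x \<notin> C j"
    by (rule AE_finite_allI) (use finI null in auto)
  then show ?thesis
  proof eventually_elim
    case (elim x)
    have "(\<Sum>j\<in>{j\<in>I. 0 < measure P (C j)}. indicator (C j) x :: real) = (\<Sum>j\<in>I. indicator (C j) x)"
      by (rule sum.mono_neutral_left) (use finI elim in \<open>auto simp: indicator_def\<close>)
    also have "\<dots> = 1" by (rule partition_sum[OF finI Cdisj Ccov])
    finally show ?case .
  qed
qed

locale fin = dp P f I0 C0 for P f and I0 :: "int set" and C0 +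
  fixes I1 :: "int set" and C1 :: "int \<Rightarrow> real set" and lam :: real
  assumes finI1: "finite I1" and C1m[measurable]: "\<And>j. C1 j \<in> sets borel"
    and C1disj: "\<And>i j. i \<in> I1 \<Longrightarrow> j \<in> I1 \<Longrightarrow> i \<noteq> j \<Longrightarrow> C1 i \<inter> C1 j = {}"
    and C1cov: "\<And>y. \<exists>j\<in>I1. y \<in> C1 j"
    and lam: "0 < lam" "lam \<le> 1"
begin

definition "p1 j = measure P (C1 j)"
definition "I1' = {j\<in>I1. 0 < p1 j}"
definition "I0'' = {i\<in>I'. lam < 1}"
definition "T = e0 ` I0'' \<union> e1 ` I1'"
definition "h t x = (if t \<in> e0 ` I0'' then (1 - lam) * a (THE i. e0 i = t) x
   else if t \<in> e1 ` I1' then lam * indicator (C1 (THE j. e1 j = t)) x else 0)"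
definition "k t x = (if t \<in> e0 ` I0'' then (1 - lam) * indicator (C0 (THE i. e0 i = t)) x
   else if t \<in> e1 ` I1' then lam * indicator (C1 (THE j. e1 j = t)) x else 0)"
definition "w t = (if t \<in> e0 ` I0'' then (1 - lam) * p (THE i. e0 i = t)
   else if t \<in> e1 ` I1' then lam * p1 (THE j. e1 j = t) else 0)"

lemma the0: "(THE i. e0 i = e0 i') = i'" using e0_inj by (auto dest: injD)
lemma the1: "(THE j. e1 j = e1 j') = j'" using e1_inj by (auto dest: injD)

lemma notin1: "e0 i \<notin> e1 ` B" using e01 by auto
lemma notin0: "e1 j \<notin> e0 ` B" using e01 by (metis image_iff)

lemma h0: "i \<in> I0'' \<Longrightarrow> h (e0 i) x = (1 - lam) * a i x" unfolding h_def by (simp add: the0)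
lemma h1: "j \<in> I1' \<Longrightarrow> h (e1 j) x = lam * indicator (C1 j) x" unfolding h_def by (simp add: the1 notin0)
lemma k0: "i \<in> I0'' \<Longrightarrow> k (e0 i) x = (1 - lam) * indicator (C0 i) x" unfolding k_def by (simp add: the0)
lemma k1: "j \<in> I1' \<Longrightarrow> k (e1 j) x = lam * indicator (C1 j) x" unfolding k_def by (simp add: the1 notin0)
lemma w0: "i \<in> I0'' \<Longrightarrow> w (e0 i) = (1 - lam) * p i" unfolding w_def by (simp add: the0)
lemma w1: "j \<in> I1' \<Longrightarrow> w (e1 j) = lam * p1 j" unfolding w_def by (simp add: the1 notin0)

lemma finI': "finite I'" unfolding I'_def using finI by simp
lemma finI0'': "finite I0''" unfolding I0''_def using finI' by simp
lemma finI1': "finite I1'" unfolding I1'_def using finI1 by simp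
lemma finT: "finite T" unfolding T_def using finI0'' finI1' by simp

lemma h_meas[measurable]: "h t \<in> borel_measurable borel"
  unfolding h_def by (cases "t \<in> e0 ` I0''"; cases "t \<in> e1 ` I1'") simp_all
lemma k_meas[measurable]: "k t \<in> borel_measurable borel"
  unfolding k_def by (cases "t \<in> e0 ` I0''"; cases "t \<in> e1 ` I1'") simp_all


lemma I1'_ne: "I1' \<noteq> {}"
proof
  assume e: "I1' = {}"
  have "AE x in P. (\<Sum>j\<in>{j\<in>I1. 0 < measure P (C1 j)}. indicator (C1 j) x :: real) = 1"
    by (rule pos_partition_AE[OF P sP finI1 C1m C1disj C1cov])
  then have "AE x in P. False" using e unfolding I1'_def p1_def by simp
  then show False using prob_space.AE_False[OF P] by simp
qed

lemma T_ne: "T \<noteq> {}" unfolding T_def using I1'_ne by simp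

lemma p_pos0: "i \<in> I0'' \<Longrightarrow> 0 < p i" unfolding I0''_def I'_def by auto
lemma lam_lt: "i \<in> I0'' \<Longrightarrow> lam < 1" unfolding I0''_def by auto
lemma p1_pos: "j \<in> I1' \<Longrightarrow> 0 < p1 j" unfolding I1'_def by auto

lemma emP: "emeasure P A = ennreal (measure P A)" if "A \<in> sets borel" for A
  using that sP finite_measure.emeasure_eq_measure[OF prob_space.finite_measure[OF P]] by simp

lemma hT: "t \<in> T \<Longrightarrow> (\<exists>i\<in>I0''. t = e0 i) \<or> (\<exists>j\<in>I1'. t = e1 j)"
  unfolding T_def by auto

lemma fc_inst: "fc P T h k w"
proof (rule fc.intro)
  show "prob_space P" by (rule P)
  show "sets P = sets borel" by (rule sP)
  show "finite T" by (rule finT)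
  show "T \<noteq> {}" by (rule T_ne)
  show "h t \<in> borel_measurable borel" for t by simp
  show "k t \<in> borel_measurable borel" for t by simp
  show "0 \<le> h t x" for t x
    unfolding h_def using lam a_nn by (auto intro!: mult_nonneg_nonneg)
  show "h t x \<le> 1" for t x
  proof -
    have "(1 - lam) * a i x \<le> 1" for i
    proof -
      have "(1 - lam) * a i x \<le> 1 * 1" using lam a_nn[of i x] a_le1[of i x] by (intro mult_mono) auto
      then show ?thesis by simp
    qed
    moreover have "lam * indicator A x \<le> (1::real)" for A using lam by (auto simp: indicator_def)
    ultimately show ?thesis unfolding h_def by auto
  qed
  show "0 \<le> k t x" for t x
    unfolding k_def using lam by (auto intro!: mult_nonneg_nonneg)
  show "0 < w t" if "t \<in> T" for t
    using hT[OF that] lam p_pos0 lam_lt p1_pos by (auto simp: w0 w1)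
  show "(\<integral>\<^sup>+x. ennreal (h t x) \<partial>P) = ennreal (w t)" if "t \<in> T" for t
    using hT[OF that]
  proof
    assume "\<exists>i\<in>I0''. t = e0 i"
    then obtain i where i: "i \<in> I0''" "t = e0 i" by blast
    have "(\<integral>\<^sup>+x. ennreal (h t x) \<partial>P) = (\<integral>\<^sup>+x. ennreal (1 - lam) * ennreal (a i x) \<partial>P)"
      using i lam a_nn by (intro nn_integral_cong) (simp add: h0 ennreal_mult)
    also have "\<dots> = ennreal (1 - lam) * ennreal (p i)" by (simp add: nn_integral_cmult a_int)
    also have "\<dots> = ennreal (w t)" using i lam p_nn by (simp add: w0 ennreal_mult)
    finally show ?thesis .
  next
    assume "\<exists>j\<in>I1'. t = e1 j"
    then obtain j where j: "j \<in> I1'" "t = e1 j" by blast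
    have "(\<integral>\<^sup>+x. ennreal (h t x) \<partial>P) = (\<integral>\<^sup>+x. ennreal lam * indicator (C1 j) x \<partial>P)"
      using j lam by (intro nn_integral_cong) (simp add: h1 ennreal_mult indicator_def)
    also have "\<dots> = ennreal lam * ennreal (p1 j)" using sP by (simp add: nn_integral_cmult emP p1_def)
    also have "\<dots> = ennreal (w t)" using j lam by (simp add: w1 ennreal_mult p1_def)
    finally show ?thesis .
  qed
  show "(\<integral>\<^sup>+x. ennreal (k t x) \<partial>P) = ennreal (w t)" if "t \<in> T" for t
    using hT[OF that]
  proof
    assume "\<exists>i\<in>I0''. t = e0 i"
    then obtain i where i: "i \<in> I0''" "t = e0 i" by blast
    have "(\<integral>\<^sup>+x. ennreal (k t x) \<partial>P) = (\<integral>\<^sup>+x. ennreal (1 - lam) * indicator (C0 i) x \<partial>P)"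
      using i lam by (intro nn_integral_cong) (simp add: k0 ennreal_mult indicator_def)
    also have "\<dots> = ennreal (1 - lam) * ennreal (p i)" using sP by (simp add: nn_integral_cmult emP p_def)
    also have "\<dots> = ennreal (w t)" using i lam p_nn by (simp add: w0 ennreal_mult)
    finally show ?thesis .
  next
    assume "\<exists>j\<in>I1'. t = e1 j"
    then obtain j where j: "j \<in> I1'" "t = e1 j" by blast
    have "(\<integral>\<^sup>+x. ennreal (k t x) \<partial>P) = (\<integral>\<^sup>+x. ennreal lam * indicator (C1 j) x \<partial>P)"
      using j lam by (intro nn_integral_cong) (simp add: k1 ennreal_mult indicator_def)
    also have "\<dots> = ennreal lam * ennreal (p1 j)" using sP by (simp add: nn_integral_cmult emP p1_def)
    also have "\<dots> = ennreal (w t)" using j lam by (simp add: w1 ennreal_mult p1_def)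
    finally show ?thesis .
  qed
  have s1: "AE x in P. (\<Sum>j\<in>I1'. indicator (C1 j) x :: real) = 1"
    using pos_partition_AE[OF P sP finI1 C1m C1disj C1cov] unfolding I1'_def p1_def .
  have s0: "AE x in P. (\<Sum>i\<in>I'. indicator (C0 i) x :: real) = 1"
    using pos_partition_AE[OF P sP finI Cm Cdisj Ccov] unfolding I'_def p_def .
  show "AE x in P. (\<Sum>t\<in>T. h t x) = 1"
    using s1 a_sum
  proof eventually_elim
    case (elim x)
    have "(\<Sum>t\<in>T. h t x) = (\<Sum>i\<in>I0''. h (e0 i) x) + (\<Sum>j\<in>I1'. h (e1 j) x)"
      unfolding T_def by (rule sum_T[OF finI0'' finI1'])
    also have "(\<Sum>i\<in>I0''. h (e0 i) x) = (1 - lam) * (\<Sum>i\<in>I0''. a i x)"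
      by (simp add: h0 sum_distrib_left)
    also have "(\<Sum>j\<in>I1'. h (e1 j) x) = lam * (\<Sum>j\<in>I1'. indicator (C1 j) x)"
      by (simp add: h1 sum_distrib_left)
    also have "(1 - lam) * (\<Sum>i\<in>I0''. a i x) = 1 - lam"
    proof (cases "lam < 1")
      case True then have "I0'' = I'" unfolding I0''_def by auto
      then show ?thesis using elim by simp
    next
      case False then show ?thesis using lam by simp
    qed
    finally show ?case using elim by simp
  qed
  show "AE x in P. (\<Sum>t\<in>T. k t x) = 1"
    using s1 s0
  proof eventually_elim
    case (elim x)
    have "(\<Sum>t\<in>T. k t x) = (\<Sum>i\<in>I0''. k (e0 i) x) + (\<Sum>j\<in>I1'. k (e1 j) x)"
      unfolding T_def by (rule sum_T[OF finI0'' finI1'])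
    also have "(\<Sum>i\<in>I0''. k (e0 i) x) = (1 - lam) * (\<Sum>i\<in>I0''. indicator (C0 i) x)"
      by (simp add: k0 sum_distrib_left)
    also have "(\<Sum>j\<in>I1'. k (e1 j) x) = lam * (\<Sum>j\<in>I1'. indicator (C1 j) x)"
      by (simp add: k1 sum_distrib_left)
    also have "(1 - lam) * (\<Sum>i\<in>I0''. indicator (C0 i) x) = 1 - lam"
    proof (cases "lam < 1")
      case True then have "I0'' = I'" unfolding I0''_def by auto
      then show ?thesis using elim by simp
    next
      case False then show ?thesis using lam by simp
    qed
    finally show ?case using elim by simp
  qed
qed


sublocale F: fc P T h k w by (rule fc_inst)

definition "c1 = (\<Sum>j\<in>I1'. \<integral>x. indicator (C1 j) x * ln (indicator (C1 j) x / p1 j) \<partial>P)"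
definition "S0 = (\<Sum>i\<in>I0''. \<integral>x. a i x * ln (a i x / p i) \<partial>P)"

lemma mi_eq: "mutual_info F.N fst F.Xt = ereal ((1 - lam) * S0 + lam * c1)"
proof -
  have "(\<Sum>t\<in>T. \<integral>x. h t x * ln (h t x / w t) \<partial>P)
      = (\<Sum>i\<in>I0''. \<integral>x. h (e0 i) x * ln (h (e0 i) x / w (e0 i)) \<partial>P) + (\<Sum>j\<in>I1'. \<integral>x. h (e1 j) x * ln (h (e1 j) x / w (e1 j)) \<partial>P)"
    unfolding T_def by (rule sum_T[OF finI0'' finI1'])
  also have "(\<Sum>i\<in>I0''. \<integral>x. h (e0 i) x * ln (h (e0 i) x / w (e0 i)) \<partial>P) = (1 - lam) * S0"
    unfolding S0_def sum_distrib_left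
  proof (rule sum.cong[OF refl])
    fix i assume i: "i \<in> I0''"
    have l: "1 - lam \<noteq> 0" using lam_lt[OF i] by simp
    have "(\<integral>x. h (e0 i) x * ln (h (e0 i) x / w (e0 i)) \<partial>P) = (\<integral>x. (1 - lam) * (a i x * ln (a i x / p i)) \<partial>P)"
      using i l by (intro Bochner_Integration.integral_cong) (simp_all add: h0 w0)
    also have "\<dots> = (1 - lam) * (\<integral>x. a i x * ln (a i x / p i) \<partial>P)" by simp
    finally show "(\<integral>x. h (e0 i) x * ln (h (e0 i) x / w (e0 i)) \<partial>P) = (1 - lam) * (\<integral>x. a i x * ln (a i x / p i) \<partial>P)" .
  qed
  also have "(\<Sum>j\<in>I1'. \<integral>x. h (e1 j) x * ln (h (e1 j) x / w (e1 j)) \<partial>P) = lam * c1"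
    unfolding c1_def sum_distrib_left
  proof (rule sum.cong[OF refl])
    fix j assume j: "j \<in> I1'"
    have l: "lam \<noteq> 0" using lam by simp
    have "(\<integral>x. h (e1 j) x * ln (h (e1 j) x / w (e1 j)) \<partial>P) = (\<integral>x. lam * (indicator (C1 j) x * ln (indicator (C1 j) x / p1 j)) \<partial>P)"
      using j l by (intro Bochner_Integration.integral_cong) (simp_all add: h1 w1 indicator_def)
    also have "\<dots> = lam * (\<integral>x. indicator (C1 j) x * ln (indicator (C1 j) x / p1 j) \<partial>P)" by simp
    finally show "(\<integral>x. h (e1 j) x * ln (h (e1 j) x / w (e1 j)) \<partial>P) = lam * (\<integral>x. indicator (C1 j) x * ln (indicator (C1 j) x / p1 j) \<partial>P)" .
  qed
  finally show ?thesis using F.mi_value by simp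
qed

lemma S0_le: "lam < 1 \<Longrightarrow> S0 \<le> (\<integral>z. f z * ln (f z) \<partial>(P \<Otimes>\<^sub>M P))"
proof -
  assume "lam < 1"
  then have "I0'' = I'" unfolding I0''_def by auto
  then show ?thesis unfolding S0_def using dp_ineq by simp
qed

definition "Vc1 j = (\<integral>\<^sup>+y. \<integral>\<^sup>+y'. ennreal ((y - y')^2) * indicator (C1 j) y * indicator (C1 j) y' \<partial>P \<partial>P)"

lemma dist_bound:
  assumes eta: "0 < \<eta>"
  shows "(\<integral>\<^sup>+\<omega>. ennreal ((fst \<omega> - snd (snd \<omega>))^2) \<partial>F.N)
    \<le> ennreal (1 - lam) * (ennreal (1 + \<eta>) * (\<integral>\<^sup>+x. \<integral>\<^sup>+y. ennreal ((x - y)^2) * ennreal (f (x,y)) \<partial>P \<partial>P)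
         + ennreal (1 + 1 / \<eta>) * (\<Sum>i\<in>I'. ennreal (1 / p i) * Vc i))
       + ennreal lam * (\<Sum>j\<in>I1'. ennreal (1 / p1 j) * Vc1 j)"
proof -
  let ?d = "\<lambda>t. \<integral>\<^sup>+x. \<integral>\<^sup>+y. ennreal ((x - y)^2) * ennreal (h t x * k t y / w t) \<partial>P \<partial>P"
  have "(\<integral>\<^sup>+\<omega>. ennreal ((fst \<omega> - snd (snd \<omega>))^2) \<partial>F.N) = (\<Sum>t\<in>T. ?d t)"
    by (rule F.distortion)
  also have "\<dots> = (\<Sum>i\<in>I0''. ?d (e0 i)) + (\<Sum>j\<in>I1'. ?d (e1 j))"
    unfolding T_def by (rule sum_T[OF finI0'' finI1'])
  also have "(\<Sum>i\<in>I0''. ?d (e0 i)) \<le> ennreal (1 - lam) * (ennreal (1 + \<eta>) * (\<integral>\<^sup>+x. \<integral>\<^sup>+y. ennreal ((x - y)^2) * ennreal (f (x,y)) \<partial>P \<partial>P)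
         + ennreal (1 + 1 / \<eta>) * (\<Sum>i\<in>I'. ennreal (1 / p i) * Vc i))"
  proof -
    have "(\<Sum>i\<in>I0''. ?d (e0 i)) \<le> (\<Sum>i\<in>I0''. ennreal (1 - lam) * (ennreal (1 + \<eta>) * Dc i + ennreal (1 + 1 / \<eta>) * ennreal (1 / p i) * Vc i))"
    proof (rule sum_mono)
      fix i assume i: "i \<in> I0''"
      have iI: "i \<in> I'" using i unfolding I0''_def by auto
      have l: "0 < 1 - lam" using lam_lt[OF i] by simp
      have "?d (e0 i) = (\<integral>\<^sup>+x. \<integral>\<^sup>+y. ennreal ((x - y)^2) * ennreal ((1 - lam) * a i x * indicator (C0 i) y / p i) \<partial>P \<partial>P)"
      proof (intro nn_integral_cong)
      fix x y
      have pp: "0 < p i" by (rule p_pos0[OF i])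
      have "h (e0 i) x * k (e0 i) y / w (e0 i) = ((1 - lam) * ((1 - lam) * a i x * indicator (C0 i) y)) / ((1 - lam) * p i)"
        using i by (simp add: h0 k0 w0 mult_ac)
      also have "\<dots> = (1 - lam) * a i x * indicator (C0 i) y / p i"
        using l by (rule mult_divide_mult_cancel_left[OF less_imp_neq[symmetric]])
      finally show "ennreal ((x - y)^2) * ennreal (h (e0 i) x * k (e0 i) y / w (e0 i)) = ennreal ((x - y)^2) * ennreal ((1 - lam) * a i x * indicator (C0 i) y / p i)" by simp
    qed
      also have "\<dots> \<le> ennreal (1 - lam) * (ennreal (1 + \<eta>) * Dc i + ennreal (1 + 1 / \<eta>) * ennreal (1 / p i) * Vc i)"
        by (rule cell_dist[OF iI _ eta]) (use l in simp)
      finally show "?d (e0 i) \<le> ennreal (1 - lam) * (ennreal (1 + \<eta>) * Dc i + ennreal (1 + 1 / \<eta>) * ennreal (1 / p i) * Vc i)" .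
    qed
    also have "\<dots> = ennreal (1 - lam) * (ennreal (1 + \<eta>) * (\<Sum>i\<in>I0''. Dc i) + ennreal (1 + 1 / \<eta>) * (\<Sum>i\<in>I0''. ennreal (1 / p i) * Vc i))"
    proof -
      have "(\<Sum>i\<in>I0''. ennreal (1 - lam) * (ennreal (1 + \<eta>) * Dc i + ennreal (1 + 1 / \<eta>) * ennreal (1 / p i) * Vc i))
          = ennreal (1 - lam) * (\<Sum>i\<in>I0''. ennreal (1 + \<eta>) * Dc i + ennreal (1 + 1 / \<eta>) * (ennreal (1 / p i) * Vc i))"
        by (simp add: sum_distrib_left mult.assoc)
      also have "(\<Sum>i\<in>I0''. ennreal (1 + \<eta>) * Dc i + ennreal (1 + 1 / \<eta>) * (ennreal (1 / p i) * Vc i))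
          = ennreal (1 + \<eta>) * (\<Sum>i\<in>I0''. Dc i) + ennreal (1 + 1 / \<eta>) * (\<Sum>i\<in>I0''. ennreal (1 / p i) * Vc i)"
        by (simp add: sum.distrib sum_distrib_left)
      finally show ?thesis .
    qed
    also have "\<dots> \<le> ennreal (1 - lam) * (ennreal (1 + \<eta>) * (\<integral>\<^sup>+x. \<integral>\<^sup>+y. ennreal ((x - y)^2) * ennreal (f (x,y)) \<partial>P \<partial>P)
         + ennreal (1 + 1 / \<eta>) * (\<Sum>i\<in>I'. ennreal (1 / p i) * Vc i))"
    proof -
      have sub: "I0'' \<subseteq> I'" unfolding I0''_def by auto
      have a1: "(\<Sum>i\<in>I0''. Dc i) \<le> (\<Sum>i\<in>I'. Dc i)" by (rule sum_mono2[OF finI' sub]) simp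
      have a2: "(\<Sum>i\<in>I0''. ennreal (1 / p i) * Vc i) \<le> (\<Sum>i\<in>I'. ennreal (1 / p i) * Vc i)" by (rule sum_mono2[OF finI' sub]) simp
      have "(\<Sum>i\<in>I0''. Dc i) \<le> (\<integral>\<^sup>+x. \<integral>\<^sup>+y. ennreal ((x - y)^2) * ennreal (f (x,y)) \<partial>P \<partial>P)"
        using a1 Dc_sum by (rule order_trans)
      then show ?thesis using a2 by (intro mult_left_mono add_mono) auto
    qed
    finally show ?thesis .
  qed
  also have "(\<Sum>j\<in>I1'. ?d (e1 j)) = ennreal lam * (\<Sum>j\<in>I1'. ennreal (1 / p1 j) * Vc1 j)"
    unfolding sum_distrib_left
  proof (rule sum.cong[OF refl])
    fix j assume j: "j \<in> I1'"
    have l: "0 < lam" using lam by simp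
    have pp: "0 < p1 j" by (rule p1_pos[OF j])
    have "?d (e1 j) = (\<integral>\<^sup>+x. \<integral>\<^sup>+y. (ennreal lam * ennreal (1 / p1 j)) * (ennreal ((x - y)^2) * indicator (C1 j) x * indicator (C1 j) y) \<partial>P \<partial>P)"
      using j l pp by (intro nn_integral_cong) (auto simp: h1 k1 w1 indicator_def ennreal_mult[symmetric])
    also have "\<dots> = (ennreal lam * ennreal (1 / p1 j)) * Vc1 j"
      unfolding Vc1_def
      by (subst nn_integral_cmult[symmetric]) (rule sigma_finite_measure.borel_measurable_nn_integral[OF P_sf], measurable, simp add: nn_integral_cmult)
    finally show "?d (e1 j) = ennreal lam * (ennreal (1 / p1 j) * Vc1 j)" by (simp add: mult.assoc)
  qed
  finally show ?thesis by (simp add: add_mono)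
qed

end



context fin begin

lemma realize:
  assumes mi: "mutual_info F.N fst F.Xt \<le> B"
    and dist: "(\<integral>\<^sup>+\<omega>. ennreal ((fst \<omega> - snd (snd \<omega>))^2) \<partial>F.N) \<le> ennreal D"
  shows "\<exists>(N :: (real \<times> real \<times> real) measure) X' Xt Xh.
           prob_space N \<and>
           X' \<in> borel_measurable N \<and> Xt \<in> borel_measurable N \<and> Xh \<in> borel_measurable N \<and>
           distr N borel X' = P \<and>
           finite (Xt ` space N) \<and>
           markov_chain_fin_mid N X' Xt Xh \<and>
           mutual_info N X' Xt \<le> B \<and>
           (\<integral>\<^sup>+ \<omega>. ennreal ((X' \<omega> - Xh \<omega>)^2) \<partial>N) \<le> ennreal D \<and>
           distr N borel Xh = P"
proof (intro exI conjI)
  show "prob_space F.N" by (rule F.probN)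
  show "fst \<in> borel_measurable F.N" by measurable
  show "F.Xt \<in> borel_measurable F.N" by measurable
  show "(\<lambda>\<omega>. snd (snd \<omega>)) \<in> borel_measurable F.N" by measurable
  show "distr F.N borel fst = P" by (rule F.distrX)
  show "finite (F.Xt ` space F.N)" by (rule finite_subset[OF _ finT]) (use F.Xt_in in auto)
  show "markov_chain_fin_mid F.N fst F.Xt (\<lambda>\<omega>. snd (snd \<omega>))" by (rule F.markov)
  show "mutual_info F.N fst F.Xt \<le> B" by (rule mi)
  show "(\<integral>\<^sup>+\<omega>. ennreal ((fst \<omega> - snd (snd \<omega>))^2) \<partial>F.N) \<le> ennreal D" by (rule dist)
  show "distr F.N borel (\<lambda>\<omega>. snd (snd \<omega>)) = P" by (rule F.distrY)
qed

end

lemma kl_nonneg_density: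
  fixes P :: "real measure" and f :: "real \<times> real \<Rightarrow> real"
  assumes P: "prob_space P" and sP: "sets P = sets borel"
    and fm: "f \<in> borel_measurable (borel \<Otimes>\<^sub>M borel)" and fnn: "\<And>z. 0 \<le> f z"
    and pr: "prob_space (density (P \<Otimes>\<^sub>M P) (\<lambda>z. ennreal (f z)))"
    and int: "integrable (P \<Otimes>\<^sub>M P) (\<lambda>z. f z * ln (f z))"
  shows "0 \<le> (\<integral>z. f z * ln (f z) \<partial>(P \<Otimes>\<^sub>M P))"
proof -
  have sPP: "sets (P \<Otimes>\<^sub>M P) = sets (borel \<Otimes>\<^sub>M borel)" by (intro sets_pair_measure_cong sP)
  have fm': "f \<in> borel_measurable (P \<Otimes>\<^sub>M P)" using fm by (simp add: measurable_cong_sets[OF sPP refl])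
  interpret PP: prob_space "P \<Otimes>\<^sub>M P" by (rule prob_space_pair[OF P P])
  interpret I: information_space "P \<Otimes>\<^sub>M P" "exp 1" by standard simp
  have "0 \<le> KL_divergence (exp 1) (P \<Otimes>\<^sub>M P) (density (P \<Otimes>\<^sub>M P) (\<lambda>z. ennreal (f z)))"
    by (rule I.KL_nonneg[OF pr fm']) (use fnn int in \<open>auto simp: log_e\<close>)
  also have "\<dots> = (\<integral>z. f z * ln (f z) \<partial>(P \<Otimes>\<^sub>M P))"
    by (subst PP.KL_density) (use fm' fnn in \<open>auto simp: log_e\<close>)
  finally show ?thesis .
qed

lemma R_nonneg:
  fixes P :: "real measure"
  assumes P: "prob_space P" and sP: "sets P = sets borel"
  shows "0 \<le> rate_perfect_realism P D"
  unfolding rate_perfect_realism_def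
proof (rule Inf_greatest)
  fix x assume "x \<in> {mi_joint J | J. prob_space J \<and> sets J = sets (borel \<Otimes>\<^sub>M borel) \<and>
            distr J borel fst = P \<and> distr J borel snd = P \<and>
            (\<integral>\<^sup>+ z. ennreal ((fst z - snd z)^2) \<partial>J) \<le> ennreal D}"
  then obtain J where x: "x = mi_joint J" and J: "prob_space J" and sJ: "sets J = sets (borel \<Otimes>\<^sub>M borel)"
    and d1: "distr J borel fst = P" and d2: "distr J borel snd = P" by blast
  have "0 \<le> mi_joint J"
  proof (cases "mi_joint J = \<infinity>")
    case True then show ?thesis by simp
  next
    case False
    obtain f where f: "f \<in> borel_measurable (borel \<Otimes>\<^sub>M borel)" "\<forall>z. 0 \<le> f z"
      "J = density (P \<Otimes>\<^sub>M P) (\<lambda>z. ennreal (f z))" "integrable (P \<Otimes>\<^sub>M P) (\<lambda>z. f z * ln (f z))"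
      "mi_joint J = ereal (\<integral>z. f z * ln (f z) \<partial>(P \<Otimes>\<^sub>M P))"
      using J_density[OF P sP J sJ d1 d2 False] by blast
    have "0 \<le> (\<integral>z. f z * ln (f z) \<partial>(P \<Otimes>\<^sub>M P))"
      by (rule kl_nonneg_density[OF P sP f(1)]) (use f J in auto)
    then show ?thesis using f(5) by simp
  qed
  then show "0 \<le> x" using x by simp
qed

lemma J_dist:
  fixes P :: "real measure" and f :: "real \<times> real \<Rightarrow> real"
  assumes P: "prob_space P" and sP: "sets P = sets borel"
    and fm: "f \<in> borel_measurable (borel \<Otimes>\<^sub>M borel)"
  shows "(\<integral>\<^sup>+z. ennreal ((fst z - snd z)^2) \<partial>density (P \<Otimes>\<^sub>M P) (\<lambda>z. ennreal (f z)))
       = (\<integral>\<^sup>+x. \<integral>\<^sup>+y. ennreal ((x - y)^2) * ennreal (f (x,y)) \<partial>P \<partial>P)"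
proof -
  have sP'[measurable_cong]: "sets P = sets borel" by (rule sP)
  have fm'[measurable]: "f \<in> borel_measurable (borel \<Otimes>\<^sub>M borel)" by (rule fm)
  have Psf: "sigma_finite_measure P" using P by (simp add: prob_space_imp_sigma_finite)
  have "(\<integral>\<^sup>+z. ennreal ((fst z - snd z)^2) \<partial>density (P \<Otimes>\<^sub>M P) (\<lambda>z. ennreal (f z)))
      = (\<integral>\<^sup>+z. ennreal (f z) * ennreal ((fst z - snd z)^2) \<partial>(P \<Otimes>\<^sub>M P))"
    by (rule nn_integral_density) measurable
  also have "\<dots> = (\<integral>\<^sup>+x. \<integral>\<^sup>+y. ennreal (f (x,y)) * ennreal ((x - y)^2) \<partial>P \<partial>P)"
    using sigma_finite_measure.nn_integral_fst[OF Psf, of "\<lambda>z. ennreal (f z) * ennreal ((fst z - snd z)^2)" P, symmetric]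
    by simp
  finally show ?thesis by (simp add: mult.commute)
qed

lemma qz_part:
  "finite {- int (n * n) .. int (n * n)}"
  "\<And>i. {y. qz n y = i} \<in> sets borel"
  "\<And>i j. i \<in> {- int (n * n) .. int (n * n)} \<Longrightarrow> j \<in> {- int (n * n) .. int (n * n)} \<Longrightarrow> i \<noteq> j \<Longrightarrow> {y. qz n y = i} \<inter> {y. qz n y = j} = {}"
  "\<And>y. \<exists>i\<in>{- int (n * n) .. int (n * n)}. y \<in> {y. qz n y = i}"
     apply simp
    apply (rule qz_cell_meas)
   apply blast
  subgoal for y using qz_range[of n y] by blast
  done


theorem mainTheorem14:
  fixes M :: "'a measure" and X :: "'a \<Rightarrow> real" and D \<epsilon> :: real
  assumes "prob_space M"
    and "X \<in> borel_measurable M"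
    and "integrable M (\<lambda>\<omega>. (X \<omega>)^2)"
    and "D > 0" and "\<epsilon> > 0"
  shows "\<exists>(N :: (real \<times> real \<times> real) measure) X' Xt Xh.
           prob_space N \<and>
           X' \<in> borel_measurable N \<and> Xt \<in> borel_measurable N \<and> Xh \<in> borel_measurable N \<and>
           distr N borel X' = distr M borel X \<and>
           finite (Xt ` space N) \<and>
           markov_chain_fin_mid N X' Xt Xh \<and>
           mutual_info N X' Xt \<le> rate_perfect_realism (distr M borel X) D + ereal \<epsilon> \<and>
           (\<integral>\<^sup>+ \<omega>. ennreal ((X' \<omega> - Xh \<omega>)^2) \<partial>N) \<le> ennreal D \<and>
           distr N borel Xh = distr M borel X"
proof -
  note M = assms(1) and Xm = assms(2) and X2 = assms(3) and Dpos = assms(4) and epos = assms(5)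
  define P where "P = distr M borel X"
  have P: "prob_space P" unfolding P_def by (rule prob_space.prob_space_distr[OF M Xm])
  have sP: "sets P = sets borel" unfolding P_def by simp
  have int2: "integrable P (\<lambda>y. y^2)"
    unfolding P_def using X2 by (subst integrable_distr_eq[OF Xm]) auto
  define R where "R = rate_perfect_realism P D"
  have D2: "0 < D / 2" using Dpos by simp
  obtain n1 :: nat where n1: "1 \<le> n1" and V1b:
    "(\<Sum>i\<in>{i\<in>{- int (n1 * n1) .. int (n1 * n1)}. 0 < measure P {y. qz n1 y = i}}.
        ennreal (1 / measure P {y. qz n1 y = i}) *
        (\<integral>\<^sup>+y. \<integral>\<^sup>+y'. ennreal ((y - y')^2) * indicator {y. qz n1 y = i} y * indicator {y. qz n1 y = i} y' \<partial>P \<partial>P))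
      \<le> ennreal (D / 2)"
    using quantizer[OF P sP int2 D2] by blast
  define I1 where "I1 = {- int (n1 * n1) .. int (n1 * n1)}"
  define C1 where "C1 i = {y. qz n1 y = i}" for i
  have finI1: "finite I1" unfolding I1_def by simp
  have C1m: "\<And>i. C1 i \<in> sets borel" unfolding C1_def by (rule qz_cell_meas)
  have C1disj: "\<And>i j. i \<in> I1 \<Longrightarrow> j \<in> I1 \<Longrightarrow> i \<noteq> j \<Longrightarrow> C1 i \<inter> C1 j = {}" unfolding C1_def by auto
  have C1cov: "\<And>y. \<exists>i\<in>I1. y \<in> C1 i" unfolding C1_def I1_def using qz_range by blast
  note part1 = finI1 C1m C1disj C1cov
  show ?thesis
  proof (cases "R = \<infinity>")
    case True
    interpret Fi: fin P "\<lambda>_. 1" I1 C1 I1 C1 1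
      apply (rule fin.intro[OF dp.intro fin_axioms.intro])
                      apply (rule P)
                     apply (rule sP)
                    apply simp
                   apply simp
                  apply simp
                 apply (simp add: prob_space.emeasure_space_1[OF P])
                apply (simp add: prob_space.emeasure_space_1[OF P])
               apply (rule part1(1))
              apply (rule part1(2))
             apply (rule part1(3), assumption+)
            apply (rule part1(4))
           apply (rule part1(1))
          apply (rule part1(2))
         apply (rule part1(3), assumption+)
        apply (rule part1(4))
       apply simp
      apply simp
      done
    have "(\<integral>\<^sup>+\<omega>. ennreal ((fst \<omega> - snd (snd \<omega>))^2) \<partial>Fi.F.N) \<le>
      ennreal (1 - 1) * (ennreal (1 + 1) * (\<integral>\<^sup>+x. \<integral>\<^sup>+y. ennreal ((x - y)^2) * ennreal 1 \<partial>P \<partial>P)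
         + ennreal (1 + 1 / 1) * (\<Sum>i\<in>Fi.I'. ennreal (1 / Fi.p i) * Fi.Vc i))
       + ennreal 1 * (\<Sum>j\<in>Fi.I1'. ennreal (1 / Fi.p1 j) * Fi.Vc1 j)"
      by (rule Fi.dist_bound) simp
    also have "\<dots> = (\<Sum>j\<in>Fi.I1'. ennreal (1 / Fi.p1 j) * Fi.Vc1 j)" by simp
    also have "\<dots> \<le> ennreal (D / 2)"
      unfolding Fi.I1'_def Fi.p1_def Fi.Vc1_def unfolding I1_def C1_def using V1b by simp
    also have "\<dots> \<le> ennreal D" using Dpos by (intro ennreal_leI) simp
    finally have dist: "(\<integral>\<^sup>+\<omega>. ennreal ((fst \<omega> - snd (snd \<omega>))^2) \<partial>Fi.F.N) \<le> ennreal D" .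
    have mi: "mutual_info Fi.F.N fst Fi.F.Xt \<le> rate_perfect_realism P D + ereal \<epsilon>"
      using True unfolding R_def by simp
    show ?thesis using Fi.realize[OF mi dist] unfolding P_def .
  next
    case False
    have R0: "0 \<le> R" unfolding R_def by (rule R_nonneg[OF P sP])
    then obtain r where r: "R = ereal r" and r0: "0 \<le> r" using False by (cases R) auto
    have e2: "0 < \<epsilon> / 2" using epos by simp
    have "R < ereal (r + \<epsilon> / 2)" using r e2 by simp
    then obtain J where Jin: "J \<in> {J. prob_space J \<and> sets J = sets (borel \<Otimes>\<^sub>M borel) \<and>
            distr J borel fst = P \<and> distr J borel snd = P \<and>
            (\<integral>\<^sup>+ z. ennreal ((fst z - snd z)^2) \<partial>J) \<le> ennreal D}"
      and Jlt: "mi_joint J < ereal (r + \<epsilon> / 2)"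
      unfolding R_def rate_perfect_realism_def by (auto simp: Inf_less_iff)
    have J: "prob_space J" and sJ: "sets J = sets (borel \<Otimes>\<^sub>M borel)" and d1: "distr J borel fst = P"
      and d2: "distr J borel snd = P" and dJ: "(\<integral>\<^sup>+ z. ennreal ((fst z - snd z)^2) \<partial>J) \<le> ennreal D"
      using Jin by auto
    have Jfin: "mi_joint J \<noteq> \<infinity>" using Jlt by auto
    obtain f where fm: "f \<in> borel_measurable (borel \<Otimes>\<^sub>M borel)" and fnn: "\<forall>z. 0 \<le> f z"
      and Jd: "J = density (P \<Otimes>\<^sub>M P) (\<lambda>z. ennreal (f z))" and fint: "integrable (P \<Otimes>\<^sub>M P) (\<lambda>z. f z * ln (f z))"
      and mval: "mi_joint J = ereal (\<integral>z. f z * ln (f z) \<partial>(P \<Otimes>\<^sub>M P))"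
      using J_density[OF P sP J sJ d1 d2 Jfin] by blast
    define m where "m = (\<integral>z. f z * ln (f z) \<partial>(P \<Otimes>\<^sub>M P))"
    have mlt: "m < r + \<epsilon> / 2" using Jlt mval unfolding m_def by simp
    have fmarg: "AE x in P. (\<integral>\<^sup>+y. ennreal (f (x,y)) \<partial>P) = 1"
      by (rule marg_fst[OF P sP fm]) (use fnn d1 Jd in auto)
    have fmarg2: "AE y in P. (\<integral>\<^sup>+x. ennreal (f (x,y)) \<partial>P) = 1"
      by (rule marg_snd[OF P sP fm]) (use fnn d2 Jd in auto)
    have dF: "(\<integral>\<^sup>+x. \<integral>\<^sup>+y. ennreal ((x - y)^2) * ennreal (f (x,y)) \<partial>P \<partial>P) \<le> ennreal D"
      using dJ unfolding Jd J_dist[OF P sP fm] .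
    define c1v where "c1v = (\<Sum>j\<in>{j\<in>I1. 0 < measure P (C1 j)}. \<integral>x. indicator (C1 j) x * ln (indicator (C1 j) x / measure P (C1 j)) \<partial>P)"
    define lam where "lam = min (1/2) (\<epsilon> / (2 * (\<bar>c1v\<bar> + \<bar>m\<bar> + 1)))"
    have lpos: "0 < lam" unfolding lam_def using epos by (simp add: add_pos_nonneg)
    have lhalf: "lam \<le> 1/2" unfolding lam_def by (rule min.cobounded1)
    have lsmall: "lam * (\<bar>c1v\<bar> + \<bar>m\<bar> + 1) \<le> \<epsilon> / 2"
    proof -
      have pos: "0 < 2 * (\<bar>c1v\<bar> + \<bar>m\<bar> + 1)" by (simp add: add_pos_nonneg)
      have "lam \<le> \<epsilon> / (2 * (\<bar>c1v\<bar> + \<bar>m\<bar> + 1))" unfolding lam_def by (rule min.cobounded2)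
      then have "lam * (2 * (\<bar>c1v\<bar> + \<bar>m\<bar> + 1)) \<le> \<epsilon>" using pos by (simp add: pos_le_divide_eq)
      then show ?thesis by (simp add: algebra_simps)
    qed
    define \<eta> where "\<eta> = lam / (4 * (1 - lam))"
    have etapos: "0 < \<eta>" unfolding \<eta>_def using lpos lhalf by simp
    define \<delta>0 where "\<delta>0 = lam * D / (4 * (1 - lam) * (1 + 1 / \<eta>))"
    have d0pos: "0 < \<delta>0" unfolding \<delta>0_def using lpos lhalf Dpos etapos by (simp add: add_pos_pos)
    obtain n0 :: nat where n0: "1 \<le> n0" and V0b:
      "(\<Sum>i\<in>{i\<in>{- int (n0 * n0) .. int (n0 * n0)}. 0 < measure P {y. qz n0 y = i}}.
          ennreal (1 / measure P {y. qz n0 y = i}) *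
          (\<integral>\<^sup>+y. \<integral>\<^sup>+y'. ennreal ((y - y')^2) * indicator {y. qz n0 y = i} y * indicator {y. qz n0 y = i} y' \<partial>P \<partial>P))
        \<le> ennreal \<delta>0"
      using quantizer[OF P sP int2 d0pos] by blast
    define I0 where "I0 = {- int (n0 * n0) .. int (n0 * n0)}"
    define C0 where "C0 i = {y. qz n0 y = i}" for i
    have finI0: "finite I0" unfolding I0_def by simp
    have C0m: "\<And>i. C0 i \<in> sets borel" unfolding C0_def by (rule qz_cell_meas)
    have C0disj: "\<And>i j. i \<in> I0 \<Longrightarrow> j \<in> I0 \<Longrightarrow> i \<noteq> j \<Longrightarrow> C0 i \<inter> C0 j = {}" unfolding C0_def by auto
    have C0cov: "\<And>y. \<exists>i\<in>I0. y \<in> C0 i" unfolding C0_def I0_def using qz_range by blast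
    interpret Fi: fin P f I0 C0 I1 C1 lam
      apply (rule fin.intro[OF dp.intro fin_axioms.intro])
                      apply (rule P)
                     apply (rule sP)
                    apply (rule fm)
                   apply (simp add: fnn)
                  apply (rule fint)
                 apply (rule fmarg)
                apply (rule fmarg2)
               apply (rule finI0)
              apply (rule C0m)
             apply (rule C0disj, assumption+)
            apply (rule C0cov)
           apply (rule finI1)
          apply (rule C1m)
         apply (rule C1disj, assumption+)
        apply (rule C1cov)
       apply (rule lpos)
      using lhalf apply simp
      done
    have c1eq: "Fi.c1 = c1v" unfolding Fi.c1_def Fi.I1'_def Fi.p1_def c1v_def ..
    have l1: "lam < 1" using lhalf by simp
    have miv: "(1 - lam) * Fi.S0 + lam * Fi.c1 \<le> r + \<epsilon>"
    proof -
      have "(1 - lam) * Fi.S0 \<le> (1 - lam) * m"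
        using Fi.S0_le[OF l1] l1 unfolding m_def by (intro mult_left_mono) auto
      then have "(1 - lam) * Fi.S0 + lam * Fi.c1 \<le> m + lam * (c1v - m)" unfolding c1eq by (simp add: algebra_simps)
      also have "lam * (c1v - m) \<le> lam * (\<bar>c1v\<bar> + \<bar>m\<bar> + 1)" using lpos by (intro mult_left_mono) auto
      finally show ?thesis using lsmall mlt by simp
    qed
    have mi: "mutual_info Fi.F.N fst Fi.F.Xt \<le> rate_perfect_realism P D + ereal \<epsilon>"
      unfolding Fi.mi_eq R_def[symmetric] r using miv by simp
    have V0: "(\<Sum>i\<in>Fi.I'. ennreal (1 / Fi.p i) * Fi.Vc i) \<le> ennreal \<delta>0"
      unfolding Fi.I'_def Fi.p_def Fi.Vc_def unfolding I0_def C0_def using V0b by simp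
    have V1: "(\<Sum>j\<in>Fi.I1'. ennreal (1 / Fi.p1 j) * Fi.Vc1 j) \<le> ennreal (D / 2)"
      unfolding Fi.I1'_def Fi.p1_def Fi.Vc1_def unfolding I1_def C1_def using V1b by simp
    have "(\<integral>\<^sup>+\<omega>. ennreal ((fst \<omega> - snd (snd \<omega>))^2) \<partial>Fi.F.N) \<le>
      ennreal (1 - lam) * (ennreal (1 + \<eta>) * (\<integral>\<^sup>+x. \<integral>\<^sup>+y. ennreal ((x - y)^2) * ennreal (f (x,y)) \<partial>P \<partial>P)
         + ennreal (1 + 1 / \<eta>) * (\<Sum>i\<in>Fi.I'. ennreal (1 / Fi.p i) * Fi.Vc i))
       + ennreal lam * (\<Sum>j\<in>Fi.I1'. ennreal (1 / Fi.p1 j) * Fi.Vc1 j)"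
      by (rule Fi.dist_bound[OF etapos])
    also have "\<dots> \<le> ennreal (1 - lam) * (ennreal (1 + \<eta>) * ennreal D + ennreal (1 + 1 / \<eta>) * ennreal \<delta>0)
       + ennreal lam * ennreal (D / 2)"
      by (intro add_mono mult_left_mono dF V0 V1) auto
    also have "\<dots> = ennreal ((1 - lam) * ((1 + \<eta>) * D + (1 + 1 / \<eta>) * \<delta>0) + lam * (D / 2))"
      using lpos l1 etapos Dpos d0pos
      by (simp add: ennreal_mult[symmetric] ennreal_plus[symmetric] add_nonneg_nonneg mult_nonneg_nonneg del: ennreal_plus)
    also have "(1 - lam) * ((1 + \<eta>) * D + (1 + 1 / \<eta>) * \<delta>0) + lam * (D / 2) = D"
    proof -
      have a: "(1 - lam) * (1 + \<eta>) = 1 - 3 * lam / 4" unfolding \<eta>_def using l1 by (simp add: field_simps)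
      have b: "(1 - lam) * ((1 + 1 / \<eta>) * \<delta>0) = lam * D / 4"
      proof -
        define K where "K = (1 - lam) * (1 + 1 / \<eta>)"
        have "0 < 1 / \<eta>" using etapos by simp
        then have i: "0 < 1 + 1 / \<eta>" by linarith
        have Kpos: "0 < K" unfolding K_def using l1 i by (intro mult_pos_pos) auto
        have "\<delta>0 = lam * D / (4 * K)" unfolding \<delta>0_def K_def by (simp add: mult.assoc)
        have e: "(1 - lam) * ((1 + 1 / \<eta>) * \<delta>0) = K * \<delta>0" unfolding K_def by (simp only: mult.assoc)
        have "(1 - lam) * ((1 + 1 / \<eta>) * \<delta>0) = K * (lam * D / (4 * K))" unfolding e by (simp add: \<open>\<delta>0 = lam * D / (4 * K)\<close>)
        also have "\<dots> = lam * D / 4" using Kpos by (simp add: field_simps)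
        finally show ?thesis .
      qed
      have "(1 - lam) * ((1 + \<eta>) * D + (1 + 1 / \<eta>) * \<delta>0) = (1 - lam) * (1 + \<eta>) * D + (1 - lam) * ((1 + 1 / \<eta>) * \<delta>0)"
        by (simp add: algebra_simps)
      also have "\<dots> = (1 - 3 * lam / 4) * D + lam * D / 4" unfolding a b ..
      finally show ?thesis by (simp add: algebra_simps)
    qed
    finally have dist: "(\<integral>\<^sup>+\<omega>. ennreal ((fst \<omega> - snd (snd \<omega>))^2) \<partial>Fi.F.N) \<le> ennreal D" .
    show ?thesis using Fi.realize[OF mi dist] unfolding P_def .
  qed
qed


end
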